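(* In the Setting of the context, run DAT-SGD with linear weights $\alpha_t=t$ and a learning rate $0<\eta\le\rho^2/K$, where $K=\sqrt{5120}\,L$. Then for every $T\ge1$, \[ B_T:=\sum_{\tau=1}^T\alpha_\tau^2\,\mathbb{E}\Big\|\frac1M\sum_{i=1}^M\nabla f_i(x_\tau^i)-\nabla f(\bar x_\tau)\Big\|^2\le\frac{K^2\tilde\sigma^2\eta^2}{2\rho^4}\sum_{\tau=1}^T\alpha_\tau^2, \] where $\tilde\sigma^2=2\sigma^2+\zeta^2$.
   Context: Setting. Let $M,d\ge1$ be integers. For each $i\in\{1,\dots,M\}$, $\mathcal{D}_i$ is a probability distribution, $f_i(\cdot,z):\mathbb{R}^d\to\mathbb{R}$ is differentiable for each sample $z$, and $f_i(x)=\mathbb{E}_{z\sim\mathcal{D}_i}[f_i(x,z)]$ is differentiable with $\mathbb{E}_{z\sim\mathcal{D}_i}[\nabla f_i(x,z)]=\nabla f_i(x)$ for all $x$. Let $f=\frac1M\sum_{i=1}^M f_i$. Standing assumptions: (smoothness) each $\nabla f_i$ is $L$-Lipschitz, with $L>0$; (bounded variance) $\mathbb{E}_{z\sim\mathcal{D}_i}\|\nabla f_i(x,z)-\nabla f_i(x)\|^2\le\sigma^2$ for all $x\in\mathbb{R}^d$, $i\in[M]$; (bounded heterogeneity) $\frac1M\sum_{i=1}^M\|\nabla f_i(x)-\nabla f(x)\|^2\le\zeta^2$ for all $x$. Write $\tilde\sigma^2=2\sigma^2+\zeta^2$. Gossip matrix: $P\in[0,1]^{M\times M}$ is symmetric with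 $P\mathbf{1}=\mathbf{1}$ (hence doubly stochastic); its (real) eigenvalues satisfy $1=\lambda_1>|\lambda_2|\ge\cdots\ge|\lambda_M|$, and the spectral gap is $\rho=1-|\lambda_2|\in(0,1]$. Algorithm DAT-SGD: inputs $w_1\in\mathbb{R}^d$, learning rate $\eta>0$, positive weights $(\alpha_t)_{t\ge1}$; let $\alpha_{1:t}=\sum_{s=1}^t\alpha_s$, $\alpha_{1:0}=0$, $\delta_t=\alpha_t/\alpha_{1:t}$. Initialize $w_1^i=x_1^i=w_1$ for all $i$. At each round $t=1,2,\dots$, every machine $i$ draws $z_t^i\sim\mathcal{D}_i$ independently of all other samples, sets $g_t^i=\nabla f_i(x_t^i,z_t^i)$, $w_{t+1/2}^i=w_t^i-\eta\alpha_t g_t^i$, $x_{t+1/2}^i=(1-\delta_t)x_t^i+\delta_t w_{t+1/2}^i$, and then $w_{t+1}^i=\sum_{j=1}^M P_{ij}w_{t+1/2}^j$, $x_{t+1}^i=\sum_{j=1}^M P_{ij}x_{t+1/2}^j$. Averages: $\bar x_t=\frac1M\sum_i x_t^i$, $\bar w_t=\frac1M\sum_i w_t^i$, $\bar g_t=\frac1M\sum_i g_t^i$. *)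

theory Defs
  imports "HOL-Probability.Probability" "Jordan_Normal_Form.Char_Poly"
begin

definition gossip_mat :: "nat \<Rightarrow> (nat \<Rightarrow> nat \<Rightarrow> real) \<Rightarrow> real mat" where
  "gossip_mat m P = mat m m (\<lambda>(i, j). P i j)"

text \<open>Gossip matrix assumptions: entries in [0,1], symmetric, rows sum to one, and the
 (real) eigenvalues with multiplicity satisfy 1 = lambda_1 > |lambda_2| >= ... ,
 i.e. 1 is an eigenvalue of algebraic multiplicity exactly one and every other eigenvalue
 has modulus < 1.\<close>
definition gossip_matrix :: "nat \<Rightarrow> (nat \<Rightarrow> nat \<Rightarrow> real) \<Rightarrow> bool" where
  "gossip_matrix m P \<longleftrightarrow>
     (\<forall>i<m. \<forall>j<m. 0 \<le> P i j \<and> P i j \<le> 1) \<and>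
     (\<forall>i<m. \<forall>j<m. P i j = P j i) \<and>
     (\<forall>i<m. (\<Sum>j<m. P i j) = 1) \<and>
     order 1 (char_poly (gossip_mat m P)) = 1 \<and>
     (\<forall>l. eigenvalue (gossip_mat m P) l \<and> l \<noteq> 1 \<longrightarrow> \<bar>l\<bar> < 1)"

text \<open>Spectral gap rho = 1 - |lambda_2|, where |lambda_2| is the largest modulus of an eigenvalue
 other than lambda_1 = 1 (this is |lambda_2| since 1 is a simple eigenvalue); for m = 1 there is
 no second eigenvalue and we use the convention |lambda_2| = 0.\<close>
definition spectral_gap :: "nat \<Rightarrow> (nat \<Rightarrow> nat \<Rightarrow> real) \<Rightarrow> real" where
  "spectral_gap m P =
     1 - Max (insert 0 {\<bar>l\<bar> | l. eigenvalue (gossip_mat m P) l \<and> l \<noteq> 1})"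

definition dat_round ::
  "nat \<Rightarrow> (nat \<Rightarrow> nat \<Rightarrow> real) \<Rightarrow> (nat \<Rightarrow> 'a::real_vector \<Rightarrow> 'z \<Rightarrow> 'a) \<Rightarrow>
   real \<Rightarrow> (nat \<Rightarrow> real) \<Rightarrow> nat \<Rightarrow> (nat \<Rightarrow> 'z) \<Rightarrow>
   (nat \<Rightarrow> 'a) \<times> (nat \<Rightarrow> 'a) \<Rightarrow> (nat \<Rightarrow> 'a) \<times> (nat \<Rightarrow> 'a)" where
  "dat_round m P G \<eta> \<alpha> t zt wx =
     (let w = fst wx; x = snd wx;
          \<delta> = \<alpha> t / (\<Sum>s=1..t. \<alpha> s);
          g = (\<lambda>i. G i (x i) (zt i));
          wh = (\<lambda>i. w i - (\<eta> * \<alpha> t) *\<^sub>R g i);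
          xh = (\<lambda>i. (1 - \<delta>) *\<^sub>R x i + \<delta> *\<^sub>R wh i)
      in (\<lambda>i. \<Sum>j<m. P i j *\<^sub>R wh j, \<lambda>i. \<Sum>j<m. P i j *\<^sub>R xh j))"

text \<open>dat_state ... z n = (w_{n+1}, x_{n+1}); z t i is the sample z_t^i.\<close>
primrec dat_state ::
  "nat \<Rightarrow> (nat \<Rightarrow> nat \<Rightarrow> real) \<Rightarrow> (nat \<Rightarrow> 'a::real_vector \<Rightarrow> 'z \<Rightarrow> 'a) \<Rightarrow>
   real \<Rightarrow> (nat \<Rightarrow> real) \<Rightarrow> 'a \<Rightarrow> (nat \<Rightarrow> nat \<Rightarrow> 'z) \<Rightarrow> nat \<Rightarrow>
   (nat \<Rightarrow> 'a) \<times> (nat \<Rightarrow> 'a)" where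
  "dat_state m P G \<eta> \<alpha> w1 z 0 = (\<lambda>i. w1, \<lambda>i. w1)"
| "dat_state m P G \<eta> \<alpha> w1 z (Suc n) =
     dat_round m P G \<eta> \<alpha> (Suc n) (z (Suc n)) (dat_state m P G \<eta> \<alpha> w1 z n)"

definition dat_x ::
  "nat \<Rightarrow> (nat \<Rightarrow> nat \<Rightarrow> real) \<Rightarrow> (nat \<Rightarrow> 'a::real_vector \<Rightarrow> 'z \<Rightarrow> 'a) \<Rightarrow>
   real \<Rightarrow> (nat \<Rightarrow> real) \<Rightarrow> 'a \<Rightarrow> (nat \<Rightarrow> nat \<Rightarrow> 'z) \<Rightarrow> nat \<Rightarrow> nat \<Rightarrow> 'a" where
  "dat_x m P G \<eta> \<alpha> w1 z t i = snd (dat_state m P G \<eta> \<alpha> w1 z (t - 1)) i"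

end

theory Submission
  imports Defs "Jordan_Normal_Form.Jordan_Normal_Form_Uniqueness" "Jordan_Normal_Form.Spectral_Radius"
begin

lemma gossip_mat_carrier: "gossip_mat m P \<in> carrier_mat m m"
  by (simp add: gossip_mat_def)

lemma order_char_poly_complex:
  assumes "A \<in> carrier_mat n n"
  shows "Polynomial.order 1 (char_poly (of_real_hom.mat_hom A :: complex mat)) = Polynomial.order 1 (char_poly A)"
proof -
  interpret h: map_poly_inj_idom_divide_hom "of_real :: real \<Rightarrow> complex" by unfold_locales
  have "char_poly (of_real_hom.mat_hom A :: complex mat) = map_poly of_real (char_poly A)"
    using of_real_hom.char_poly_hom[OF assms] .
  then show ?thesis using h.order_hom[of 1 "char_poly A"] by simp
qed

lemma sum_list_min1_le: "sum_list (map (min (1::nat)) xs) \<le> sum_list xs"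
  by (induction xs) auto

lemma simple_one_no_second:
  assumes g: "gossip_matrix m P"
    and ev: "\<forall>i<m. (\<Sum>j<m. P i j * u j) = u i"
    and s0: "(\<Sum>i<m. u i) = 0"
    and nz: "k < m" "u k \<noteq> 0"
  shows False
proof -
  define A where "A = gossip_mat m P"
  have A: "A \<in> carrier_mat m m" unfolding A_def by (rule gossip_mat_carrier)
  define Ac where "Ac = (of_real_hom.mat_hom A :: complex mat)"
  have Ac: "Ac \<in> carrier_mat m m" using A unfolding Ac_def by simp
  have ord: "Polynomial.order 1 (char_poly Ac) = 1"
    using order_char_poly_complex[OF A] g unfolding Ac_def A_def gossip_matrix_def by simp
  obtain as where "char_poly Ac = (\<Prod>a\<leftarrow>as. [:- a, 1:])"
    using char_poly_factorized[OF Ac] by blast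
  then obtain n_as where jnf: "jordan_nf Ac n_as" using jordan_nf_exists[OF Ac] by blast
  have "dim_gen_eigenspace Ac 1 1 = sum_list (map (min 1) (map fst (filter (\<lambda>(n, e). e = 1) n_as)))"
    by (rule dim_gen_eigenspace[OF jnf])
  also have "\<dots> \<le> sum_list (map fst (filter (\<lambda>(n, e). e = 1) n_as))"
    by (rule sum_list_min1_le)
  also have "(\<lambda>(n::nat, e::complex). e = 1) = (\<lambda>na. snd na = 1)" by auto
  also have "sum_list (map fst (filter (\<lambda>na. snd na = 1) n_as)) = 1"
    using jordan_nf_order[OF jnf, of 1] ord by simp
  finally have dle: "dim_gen_eigenspace Ac 1 1 \<le> 1" .
  define B where "B = char_matrix Ac 1"
  have B: "B \<in> carrier_mat m m" unfolding B_def using Ac by simp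
  have B1: "char_matrix Ac 1 ^\<^sub>m 1 = B" unfolding B_def using B by simp
  interpret K: kernel m m B by unfold_locales (rule B)
  have kd: "K.dim \<le> 1" using dle unfolding dim_gen_eigenspace_def B1
    using K.kernel_dim by simp
  define o1 where "o1 = vec m (\<lambda>i. 1::complex)"
  define uc where "uc = vec m (\<lambda>i. complex_of_real (u i))"
  have Bv: "B *\<^sub>v v = vec m (\<lambda>i. (\<Sum>j<m. complex_of_real (P i j) * v $ j) - v $ i)"
    if v: "v \<in> carrier_vec m" for v
  proof (rule eq_vecI)
    fix i assume i: "i < dim_vec (vec m (\<lambda>i. (\<Sum>j<m. complex_of_real (P i j) * v $ j) - v $ i))"
    then have i: "i < m" by simp
    have "(B *\<^sub>v v) $ i = row B i \<bullet> v" using B i by simp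
    also have "\<dots> = (\<Sum>j<m. (Ac $$ (i,j) - (if i = j then 1 else 0)) * v $ j)"
      unfolding B_def char_matrix_def scalar_prod_def using Ac v i
      by (auto simp: atLeast0LessThan intro!: sum.cong)
    also have "\<dots> = (\<Sum>j<m. complex_of_real (P i j) * v $ j - (if i = j then v $ j else 0))"
      using A i unfolding Ac_def A_def gossip_mat_def by (auto simp: algebra_simps intro!: sum.cong)
    also have "\<dots> = (\<Sum>j<m. complex_of_real (P i j) * v $ j) - v $ i"
      using i by (simp add: sum_subtractf)
    finally show "(B *\<^sub>v v) $ i = vec m (\<lambda>i. (\<Sum>j<m. complex_of_real (P i j) * v $ j) - v $ i) $ i"
      using i by simp
  qed (use B in simp)
  have o1k: "o1 \<in> mat_kernel B"
  proof (rule mat_kernelI[OF B])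
    show "o1 \<in> carrier_vec m" unfolding o1_def by simp
    have "\<And>i. i < m \<Longrightarrow> (\<Sum>j<m. complex_of_real (P i j)) = 1"
    proof -
      fix i assume "i < m"
      then have "(\<Sum>j<m. P i j) = 1" using g unfolding gossip_matrix_def by blast
      then show "(\<Sum>j<m. complex_of_real (P i j)) = 1"
        by (metis of_real_1 of_real_sum)
    qed
    then show "B *\<^sub>v o1 = 0\<^sub>v m" unfolding o1_def
      by (subst Bv) (auto intro!: eq_vecI)
  qed
  have uck: "uc \<in> mat_kernel B"
  proof (rule mat_kernelI[OF B])
    show "uc \<in> carrier_vec m" unfolding uc_def by simp
    have "\<And>i. i < m \<Longrightarrow> (\<Sum>j<m. complex_of_real (P i j) * complex_of_real (u j)) = complex_of_real (u i)"
    proof -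
      fix i assume "i < m"
      then have "(\<Sum>j<m. P i j * u j) = u i" using ev by blast
      then show "(\<Sum>j<m. complex_of_real (P i j) * complex_of_real (u j)) = complex_of_real (u i)"
        by (metis (no_types, lifting) of_real_mult of_real_sum sum.cong)
    qed
    then show "B *\<^sub>v uc = 0\<^sub>v m" unfolding uc_def
      by (subst Bv) (auto intro!: eq_vecI)
  qed
  have m1: "m \<ge> 1" using nz by simp
  obtain k2 where k2: "k2 < m" "u k2 \<noteq> u k"
  proof (rule ccontr)
    assume "\<not> thesis"
    with that have "\<forall>j<m. u j = u k" by blast
    then have "(\<Sum>i<m. u i) = real m * u k" by simp
    with s0 nz m1 show False by simp
  qed
  have ne: "o1 \<noteq> uc"
  proof
    assume "o1 = uc"
    then have "o1 $ k = uc $ k" "o1 $ k2 = uc $ k2" by simp_all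
    then show False using k2 nz unfolding o1_def uc_def by simp
  qed
  have li: "\<not> K.lin_dep {o1, uc}"
  proof (rule K.Ker.finite_lin_indpt2)
    show "finite {o1, uc}" by simp
    show "{o1, uc} \<subseteq> mat_kernel B" using o1k uck by simp
    fix a assume lc: "K.lincomb a {o1, uc} = 0\<^sub>v m"
    have comp: "a o1 + a uc * complex_of_real (u i) = 0" if i: "i < m" for i
    proof -
      have "K.lincomb a {o1, uc} $ i = (\<Sum>x\<in>{o1, uc}. a x * x $ i)"
        by (rule K.lincomb_index[OF i]) (use o1k uck in simp)
      also have "\<dots> = a o1 + a uc * complex_of_real (u i)"
        using ne i unfolding o1_def uc_def by simp
      finally show ?thesis using lc i by simp
    qed
    have "a uc * complex_of_real (u k) = a uc * complex_of_real (u k2)"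
      using comp[OF nz(1)] comp[OF k2(1)] by (metis add_left_cancel)
    then have auc: "a uc = 0" using k2 by simp
    then have "a o1 = 0" using comp[OF nz(1)] by simp
    with auc show "\<forall>v\<in>{o1, uc}. a v = 0" by simp
  qed
  obtain Bs where Bs: "finite Bs" "K.basis Bs" using kernel_basis_exists[OF B] by blast
  have fd: "K.Ker.fin_dim"
    using Bs unfolding K.Ker.fin_dim_def K.Ker.basis_def by blast
  have "card {o1, uc} \<le> K.dim"
    by (rule K.Ker.li_le_dim(2)[OF fd _ li]) (use o1k uck in simp)
  with ne kd show False by simp
qed

definition pmul :: "nat \<Rightarrow> (nat \<Rightarrow> nat \<Rightarrow> real) \<Rightarrow> (nat \<Rightarrow> real) \<Rightarrow> nat \<Rightarrow> real" where
  "pmul m P v = (\<lambda>i. \<Sum>j<m. P i j * v j)"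

definition sqn :: "nat \<Rightarrow> (nat \<Rightarrow> real) \<Rightarrow> real" where
  "sqn m v = (\<Sum>i<m. (v i)\<^sup>2)"

definition lam2 :: "nat \<Rightarrow> (nat \<Rightarrow> nat \<Rightarrow> real) \<Rightarrow> real" where
  "lam2 m P = 1 - spectral_gap m P"

lemma lam2_eq: "lam2 m P = Max (insert 0 {\<bar>l\<bar> | l. eigenvalue (gossip_mat m P) l \<and> l \<noteq> 1})"
  unfolding lam2_def spectral_gap_def by simp

lemma eig_set_finite: "finite {\<bar>l\<bar> | l. eigenvalue (gossip_mat m P) l \<and> l \<noteq> 1}"
proof -
  have "{\<bar>l\<bar> | l. eigenvalue (gossip_mat m P) l \<and> l \<noteq> 1} \<subseteq> abs ` spectrum (gossip_mat m P)"
    unfolding spectrum_def by auto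
  moreover have "finite (spectrum (gossip_mat m P))"
    by (rule card_finite_spectrum(1)[OF gossip_mat_carrier])
  ultimately show ?thesis using finite_subset by blast
qed

lemma lam2_nonneg: "lam2 m P \<ge> 0"
  unfolding lam2_eq using eig_set_finite by simp

lemma lam2_lt1: assumes "gossip_matrix m P" shows "lam2 m P < 1"
  unfolding lam2_eq using eig_set_finite assms unfolding gossip_matrix_def
  by (subst Max_less_iff) auto

lemma eig_le:
  assumes ev: "\<forall>i<m. pmul m P y i = l * y i" and nz: "k < m" "y k \<noteq> 0" and l1: "l \<noteq> 1"
  shows "\<bar>l\<bar> \<le> lam2 m P"
proof -
  have "eigenvalue (gossip_mat m P) l"
    unfolding eigenvalue_def eigenvector_def
  proof (intro exI[of _ "vec m y"] conjI)
    show "vec m y \<in> carrier_vec (dim_row (gossip_mat m P))" by (simp add: gossip_mat_def)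
    show "vec m y \<noteq> 0\<^sub>v (dim_row (gossip_mat m P))"
    proof
      assume "vec m y = 0\<^sub>v (dim_row (gossip_mat m P))"
      then have "vec m y $ k = 0\<^sub>v m $ k" by (simp add: gossip_mat_def)
      then show False using nz by simp
    qed
    show "gossip_mat m P *\<^sub>v vec m y = l \<cdot>\<^sub>v vec m y"
    proof (rule eq_vecI)
      fix i assume "i < dim_vec (l \<cdot>\<^sub>v vec m y)"
      then have i: "i < m" by simp
      have "(gossip_mat m P *\<^sub>v vec m y) $ i = (\<Sum>j<m. P i j * y j)"
        using i by (simp add: gossip_mat_def scalar_prod_def atLeast0LessThan)
      also have "\<dots> = l * y i" using ev i unfolding pmul_def by simp
      finally show "(gossip_mat m P *\<^sub>v vec m y) $ i = (l \<cdot>\<^sub>v vec m y) $ i" using i by simp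
    qed (simp add: gossip_mat_def)
  qed
  then have "\<bar>l\<bar> \<in> {\<bar>l\<bar> | l. eigenvalue (gossip_mat m P) l \<and> l \<noteq> 1}" using l1 by blast
  then show ?thesis unfolding lam2_eq using eig_set_finite by (simp add: Max_ge_iff)
qed

lemma colsum:
  assumes g: "gossip_matrix m P"
  shows "(\<Sum>i<m. pmul m P v i) = (\<Sum>j<m. v j)"
proof -
  have "(\<Sum>i<m. pmul m P v i) = (\<Sum>j<m. v j * (\<Sum>i<m. P i j))"
    unfolding pmul_def by (subst sum.swap) (simp add: sum_distrib_left mult.commute)
  also have "\<dots> = (\<Sum>j<m. v j)"
  proof (rule sum.cong)
    fix j assume "j \<in> {..<m}"
    then have "(\<Sum>i<m. P i j) = (\<Sum>i<m. P j i)" using g unfolding gossip_matrix_def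
      by (intro sum.cong) auto
    also have "\<dots> = 1" using g \<open>j \<in> {..<m}\<close> unfolding gossip_matrix_def by blast
    finally show "v j * (\<Sum>i<m. P i j) = v j" by simp
  qed simp
  finally show ?thesis .
qed

lemma pmul_sym:
  assumes g: "gossip_matrix m P"
  shows "(\<Sum>i<m. pmul m P a i * b i) = (\<Sum>j<m. a j * pmul m P b j)"
proof -
  have "(\<Sum>i<m. pmul m P a i * b i) = (\<Sum>i<m. \<Sum>j<m. P i j * a j * b i)"
    unfolding pmul_def by (simp add: sum_distrib_right)
  also have "\<dots> = (\<Sum>j<m. \<Sum>i<m. P i j * a j * b i)" by (rule sum.swap)
  also have "\<dots> = (\<Sum>j<m. a j * pmul m P b j)"
    unfolding pmul_def sum_distrib_left
  proof (intro sum.cong refl)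
    fix j i assume "j \<in> {..<m}" "i \<in> {..<m}"
    then have "P i j = P j i" using g unfolding gossip_matrix_def by simp
    then show "P i j * a j * b i = a j * (P j i * b i)" by simp
  qed
  finally show ?thesis .
qed

lemma pmul_lin: "pmul m P (\<lambda>i. a i + e * b i) i = pmul m P a i + e * pmul m P b i"
  unfolding pmul_def by (simp add: algebra_simps sum.distrib sum_distrib_left)

lemma sqn_zero: "sqn m v = 0 \<Longrightarrow> i < m \<Longrightarrow> v i = 0"
  unfolding sqn_def by (subst (asm) sum_nonneg_eq_0_iff) auto

lemma sqn_nonneg: "sqn m v \<ge> 0" unfolding sqn_def by (simp add: sum_nonneg)

lemma pmul_cong: "(\<And>j. j < m \<Longrightarrow> a j = b j) \<Longrightarrow> pmul m P a = pmul m P b"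
  unfolding pmul_def by (auto intro!: sum.cong)

lemma sqn_cong: "(\<And>j. j < m \<Longrightarrow> a j = b j) \<Longrightarrow> sqn m a = sqn m b"
  unfolding sqn_def by (auto intro!: sum.cong)

lemma pmul_zero: "(\<And>j. j < m \<Longrightarrow> a j = 0) \<Longrightarrow> pmul m P a i = 0"
  unfolding pmul_def by (auto intro!: sum.neutral)

lemma pmul_scale: "pmul m P (\<lambda>i. c * a i) i = c * pmul m P a i"
  unfolding pmul_def by (simp add: sum_distrib_left algebra_simps)

lemma quad_zero:
  fixes q c :: real
  assumes all: "\<And>e. 2 * e * q + e\<^sup>2 * c \<le> 0" and q: "q \<ge> 0"
  shows "q = 0"
proof (rule ccontr)
  assume "q \<noteq> 0"
  with q have qp: "q > 0" by simp
  define d where "d = \<bar>c\<bar> + 1"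
  have dp: "d > 0" unfolding d_def by simp
  have h: "2 * (q / d) * q + (q / d)\<^sup>2 * c \<le> 0" by (rule all)
  have "d\<^sup>2 / q \<ge> 0" using qp by simp
  from mult_nonpos_nonneg[OF h this]
  have "(2 * (q / d) * q + (q / d)\<^sup>2 * c) * (d\<^sup>2 / q) \<le> 0" .
  moreover have "(2 * (q / d) * q + (q / d)\<^sup>2 * c) * (d\<^sup>2 / q) = 2 * q * d + q * c"
    using qp dp by (simp add: field_simps power2_eq_square)
  moreover have "2 * q * d + q * c > 0"
  proof -
    have "- \<bar>c\<bar> \<le> c" by linarith
    from mult_left_mono[OF this, of q] qp have "q * c \<ge> - (q * \<bar>c\<bar>)" by simp
    moreover have "2 * q * d = 2 * q * \<bar>c\<bar> + 2 * q" unfolding d_def by (simp add: algebra_simps)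
    moreover have "q * \<bar>c\<bar> \<ge> 0" using qp by simp
    ultimately show ?thesis using qp by linarith
  qed
  ultimately show False by linarith
qed

lemma normalize_in:
  assumes s0: "(\<Sum>i<m. v i) = 0" and qp: "sqn m v > 0"
  defines "w \<equiv> (\<lambda>i. if i < m then v i / sqrt (sqn m v) else 0)"
  shows "w \<in> Pi\<^sub>E UNIV (\<lambda>i. if i < m then {-1..1::real} else {0})"
    "(\<Sum>i<m. w i) = 0" "sqn m w = 1"
    "sqn m (pmul m P v) = sqn m v * sqn m (pmul m P w)"
proof -
  let ?q = "sqn m v"
  have sq: "sqrt ?q > 0" using qp by simp
  show "w \<in> Pi\<^sub>E UNIV (\<lambda>i. if i < m then {-1..1::real} else {0})"
  proof (rule PiE_I)
    fix i
    show "w i \<in> (if i < m then {-1..1} else {0})"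
    proof (cases "i < m")
      case True
      have "(v i)\<^sup>2 \<le> ?q" unfolding sqn_def using True
        by (intro member_le_sum) simp_all
      then have "sqrt ((v i)\<^sup>2) \<le> sqrt ?q" by (rule real_sqrt_le_mono)
      then have vq: "\<bar>v i\<bar> \<le> sqrt ?q" by (simp only: real_sqrt_abs)
      have "\<bar>v i / sqrt ?q\<bar> = \<bar>v i\<bar> / sqrt ?q" using sq by (simp add: abs_divide)
      also have "\<dots> \<le> 1" using sq vq by (simp add: divide_le_eq)
      finally have "\<bar>v i / sqrt ?q\<bar> \<le> 1" .
      then have "-1 \<le> v i / sqrt ?q \<and> v i / sqrt ?q \<le> 1"
        using abs_le_iff[of "v i / sqrt ?q" 1] by linarith
      moreover have "w i = v i / sqrt ?q" using True unfolding w_def by simp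
      ultimately show ?thesis using True by simp
    qed (simp add: w_def)
  qed simp
  have "(\<Sum>i<m. w i) = (\<Sum>i<m. v i / sqrt ?q)" unfolding w_def by (intro sum.cong) auto
  also have "\<dots> = (\<Sum>i<m. v i) / sqrt ?q" by (rule sum_divide_distrib[symmetric])
  finally show "(\<Sum>i<m. w i) = 0" using s0 by simp
  have "sqn m w = (\<Sum>i<m. (v i)\<^sup>2 / ?q)" unfolding sqn_def w_def
    using qp by (intro sum.cong) (simp_all add: power_divide sum_nonneg)
  also have "\<dots> = (\<Sum>i<m. (v i)\<^sup>2) / ?q" by (rule sum_divide_distrib[symmetric])
  also have "\<dots> = 1" using qp unfolding sqn_def by simp
  finally show "sqn m w = 1" .
  have pw: "pmul m P w i = pmul m P v i / sqrt ?q" for i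
    unfolding pmul_def w_def by (simp add: sum_divide_distrib)
  have sq2: "(sqrt ?q)\<^sup>2 = ?q" using qp by simp
  have "sqn m (pmul m P w) = (\<Sum>i<m. (pmul m P v i)\<^sup>2 / ?q)"
    unfolding sqn_def[of m "pmul m P w"] pw power_divide sq2 ..
  also have "\<dots> = sqn m (pmul m P v) / ?q"
    unfolding sqn_def[of m "pmul m P v"] by (rule sum_divide_distrib[symmetric])
  finally have "sqn m (pmul m P w) = sqn m (pmul m P v) / ?q" .
  then show "sqn m (pmul m P v) = sqn m v * sqn m (pmul m P w)" using qp by simp
qed

lemma cont_sum_coord: "continuous_on UNIV (\<lambda>v::nat \<Rightarrow> real. \<Sum>i<m. v i)"
  by (intro continuous_on_sum continuous_on_product_coordinates)

lemma cont_sqn: "continuous_on UNIV (\<lambda>v::nat \<Rightarrow> real. sqn m v)"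
  unfolding sqn_def by (intro continuous_on_sum continuous_on_power continuous_on_product_coordinates)

lemma cont_F: "continuous_on UNIV (\<lambda>v::nat \<Rightarrow> real. sqn m (pmul m P v))"
  unfolding sqn_def pmul_def
  by (intro continuous_on_sum continuous_on_power continuous_on_mult continuous_on_const
      continuous_on_product_coordinates)

lemma sqn_expand: "sqn m (\<lambda>i. a i + e * b i) = sqn m a + 2 * e * (\<Sum>i<m. a i * b i) + e\<^sup>2 * sqn m b"
  unfolding sqn_def by (simp add: power2_eq_square algebra_simps sum.distrib sum_distrib_left)

lemma spec_bound:
  assumes g: "gossip_matrix m P" and s0: "(\<Sum>i<m. v i) = 0"
  shows "sqn m (pmul m P v) \<le> (lam2 m P)\<^sup>2 * sqn m v"
proof (cases "sqn m v = 0")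
  case True
  then have "\<And>j. j < m \<Longrightarrow> v j = 0" using sqn_zero by blast
  then have "sqn m (pmul m P v) = 0" unfolding sqn_def using pmul_zero[of m v P] by simp
  then show ?thesis using True by simp
next
  case False
  then have qp: "sqn m v > 0" using sqn_nonneg[of m v] by simp
  define F where "F = (\<lambda>v. sqn m (pmul m P v))"
  define K where "K = Pi\<^sub>E UNIV (\<lambda>i. if i < m then {-1..1::real} else {0})"
  define S where "S = K \<inter> {v. (\<Sum>i<m. v i) = 0} \<inter> {v. sqn m v = 1}"
  have "compactin (product_topology (\<lambda>i. euclidean) UNIV) K"
    unfolding K_def by (subst compactin_PiE) (auto simp: compactin_euclidean_iff)
  then have cK: "compact K" by (simp add: euclidean_product_topology compactin_euclidean_iff)
  have c1: "closed {v::nat\<Rightarrow>real. (\<Sum>i<m. v i) = 0}"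
    by (rule closed_Collect_eq[OF cont_sum_coord continuous_on_const])
  have c2: "closed {v::nat\<Rightarrow>real. sqn m v = 1}"
    by (rule closed_Collect_eq[OF cont_sqn continuous_on_const])
  have cS: "compact S" unfolding S_def using cK c1 c2 by (intro compact_Int_closed) auto
  have nS: "S \<noteq> {}" using normalize_in[OF s0 qp] unfolding S_def K_def by blast
  have cF: "continuous_on S F" unfolding F_def by (rule continuous_on_subset[OF cont_F]) simp
  obtain vs where vsS: "vs \<in> S" and vmax: "\<And>y. y \<in> S \<Longrightarrow> F y \<le> F vs"
    using continuous_attains_sup[OF cS nS cF] by blast
  define \<mu> where "\<mu> = F vs"
  have vs0: "(\<Sum>i<m. vs i) = 0" and vs1: "sqn m vs = 1" using vsS unfolding S_def by auto
  have mu0: "\<mu> \<ge> 0" unfolding \<mu>_def F_def by (rule sqn_nonneg)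
  have Fb: "F u \<le> \<mu> * sqn m u" if u0: "(\<Sum>i<m. u i) = 0" for u
  proof (cases "sqn m u = 0")
    case True
    then have "\<And>j. j < m \<Longrightarrow> u j = 0" using sqn_zero by blast
    then have "F u = 0" unfolding F_def sqn_def using pmul_zero[of m u P] by simp
    then show ?thesis using True by simp
  next
    case False
    then have up: "sqn m u > 0" using sqn_nonneg[of m u] by simp
    note N = normalize_in[OF u0 up]
    define w where "w = (\<lambda>i. if i < m then u i / sqrt (sqn m u) else 0)"
    have "w \<in> S" using N unfolding S_def K_def w_def by blast
    then have "F w \<le> \<mu>" unfolding \<mu>_def by (rule vmax)
    moreover have "F u = sqn m u * F w" using N(4) unfolding F_def w_def by simp
    ultimately show ?thesis using up by (simp add: mult_left_mono mult.commute)
  qed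
  define r where "r = (\<lambda>i. pmul m P (pmul m P vs) i - \<mu> * vs i)"
  have r0: "(\<Sum>i<m. r i) = 0"
    unfolding r_def using colsum[OF g, of "pmul m P vs"] colsum[OF g, of vs] vs0
    by (simp add: sum_subtractf sum_distrib_left[symmetric])
  have key: "(\<Sum>i<m. pmul m P vs i * pmul m P r i) - \<mu> * (\<Sum>i<m. vs i * r i) = sqn m r"
  proof -
    have "(\<Sum>i<m. pmul m P vs i * pmul m P r i) = (\<Sum>i<m. pmul m P r i * pmul m P vs i)"
      by (simp add: mult.commute)
    also have "\<dots> = (\<Sum>j<m. r j * pmul m P (pmul m P vs) j)" by (rule pmul_sym[OF g])
    finally have "(\<Sum>i<m. pmul m P vs i * pmul m P r i) - \<mu> * (\<Sum>i<m. vs i * r i)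
        = (\<Sum>j<m. r j * pmul m P (pmul m P vs) j) - (\<Sum>j<m. r j * (\<mu> * vs j))"
      by (simp add: sum_distrib_left algebra_simps)
    also have "\<dots> = (\<Sum>j<m. r j * r j)"
      unfolding sum_subtractf[symmetric] by (intro sum.cong) (auto simp: r_def algebra_simps)
    finally show ?thesis unfolding sqn_def by (simp add: power2_eq_square)
  qed
  have ineq: "2 * e * sqn m r + e\<^sup>2 * (F r - \<mu> * sqn m r) \<le> 0" for e
  proof -
    have "(\<Sum>i<m. vs i + e * r i) = 0" using vs0 r0 by (simp add: sum.distrib sum_distrib_left[symmetric])
    then have "F (\<lambda>i. vs i + e * r i) \<le> \<mu> * sqn m (\<lambda>i. vs i + e * r i)" by (rule Fb)
    moreover have "F (\<lambda>i. vs i + e * r i) = F vs + 2 * e * (\<Sum>i<m. pmul m P vs i * pmul m P r i) + e\<^sup>2 * F r"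
      unfolding F_def pmul_lin by (rule sqn_expand)
    moreover have "sqn m (\<lambda>i. vs i + e * r i) = 1 + 2 * e * (\<Sum>i<m. vs i * r i) + e\<^sup>2 * sqn m r"
      using sqn_expand[of m vs e r] vs1 by simp
    ultimately have "\<mu> + 2 * e * (\<Sum>i<m. pmul m P vs i * pmul m P r i) + e\<^sup>2 * F r
        \<le> \<mu> * (1 + 2 * e * (\<Sum>i<m. vs i * r i) + e\<^sup>2 * sqn m r)" unfolding \<mu>_def by simp
    then have "2 * e * ((\<Sum>i<m. pmul m P vs i * pmul m P r i) - \<mu> * (\<Sum>i<m. vs i * r i))
        + e\<^sup>2 * (F r - \<mu> * sqn m r) \<le> 0" by (simp add: algebra_simps)
    then show ?thesis unfolding key .
  qed
  have "sqn m r = 0" by (rule quad_zero[OF ineq sqn_nonneg])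
  then have Qv: "pmul m P (pmul m P vs) i = \<mu> * vs i" if "i < m" for i
    using sqn_zero[of m r i] that unfolding r_def by simp
  define s where "s = sqrt \<mu>"
  have s0': "s \<ge> 0" and ss: "s * s = \<mu>" unfolding s_def using mu0 by simp_all
  have sle: "s \<le> lam2 m P"
  proof -
    define y where "y = (\<lambda>i. pmul m P vs i + s * vs i)"
    have Py: "pmul m P y i = s * y i" if "i < m" for i
    proof -
      have "pmul m P y i = pmul m P (pmul m P vs) i + s * pmul m P vs i"
        unfolding y_def by (rule pmul_lin)
      also have "\<dots> = s * y i" using Qv[OF that] ss unfolding y_def by (simp add: algebra_simps)
      finally show ?thesis .
    qed
    show ?thesis
    proof (cases "\<exists>k<m. y k \<noteq> 0")
      case True
      then obtain k where k: "k < m" "y k \<noteq> 0" by blast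
      have y0: "(\<Sum>i<m. y i) = 0" unfolding y_def using colsum[OF g, of vs] vs0
        by (simp add: sum.distrib sum_distrib_left[symmetric])
      have "s \<noteq> 1"
      proof
        assume "s = 1"
        then have "\<forall>i<m. (\<Sum>j<m. P i j * y j) = y i" using Py unfolding pmul_def by simp
        from simple_one_no_second[OF g this y0 k] show False .
      qed
      have "\<forall>i<m. pmul m P y i = s * y i" using Py by blast
      from eig_le[OF this k \<open>s \<noteq> 1\<close>] have "\<bar>s\<bar> \<le> lam2 m P" .
      then show ?thesis using s0' by simp
    next
      case False
      have "\<forall>i<m. pmul m P vs i = (- s) * vs i"
      proof (intro allI impI)
        fix i assume "i < m"
        then have "pmul m P vs i + s * vs i = 0" using False unfolding y_def by blast
        then show "pmul m P vs i = (- s) * vs i" by linarith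
      qed
      moreover obtain k where k: "k < m" "vs k \<noteq> 0"
      proof (rule ccontr)
        assume "\<not> thesis"
        with that have "\<And>j. j < m \<Longrightarrow> vs j = 0" by blast
        then have "sqn m vs = 0" unfolding sqn_def by simp
        with vs1 show False by simp
      qed
      moreover have "- s \<noteq> 1" using s0' by simp
      ultimately have "\<bar>- s\<bar> \<le> lam2 m P" by (rule eig_le)
      then show ?thesis using s0' by simp
    qed
  qed
  have "s\<^sup>2 \<le> (lam2 m P)\<^sup>2" by (rule power_mono[OF sle s0'])
  then have "\<mu> \<le> (lam2 m P)\<^sup>2" using ss by (simp add: power2_eq_square)
  have "sqn m (pmul m P v) = F v" unfolding F_def ..
  also have "\<dots> \<le> \<mu> * sqn m v" by (rule Fb[OF s0])
  also have "\<dots> \<le> (lam2 m P)\<^sup>2 * sqn m v"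
    using \<open>\<mu> \<le> (lam2 m P)\<^sup>2\<close> sqn_nonneg[of m v] by (rule mult_right_mono)
  finally show ?thesis .
qed

definition avg :: "nat \<Rightarrow> (nat \<Rightarrow> 'a::real_vector) \<Rightarrow> 'a" where
  "avg m u = (1 / real m) *\<^sub>R (\<Sum>j<m. u j)"

definition dev :: "nat \<Rightarrow> (nat \<Rightarrow> 'a::real_normed_vector) \<Rightarrow> real" where
  "dev m u = (\<Sum>i<m. (norm (u i - avg m u))\<^sup>2)"

definition mix :: "nat \<Rightarrow> (nat \<Rightarrow> nat \<Rightarrow> real) \<Rightarrow> (nat \<Rightarrow> 'a::real_vector) \<Rightarrow> nat \<Rightarrow> 'a" where
  "mix m P u = (\<lambda>i. \<Sum>j<m. P i j *\<^sub>R u j)"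

lemma dev_nonneg: "dev m u \<ge> 0" unfolding dev_def by (simp add: sum_nonneg)

lemma sum_dev_zero: "(\<Sum>i<m. (u i - avg m u)) = 0"
proof (cases "m = 0")
  case False
  have "(\<Sum>i<m. (u i - avg m u)) = (\<Sum>i<m. u i) - real m *\<^sub>R avg m u"
    by (simp add: sum_subtractf sum_constant_scaleR)
  also have "real m *\<^sub>R avg m u = (\<Sum>i<m. u i)" using False unfolding avg_def by simp
  finally show ?thesis by simp
qed simp

lemma avg_mix:
  assumes g: "gossip_matrix m P"
  shows "avg m (mix m P u) = avg m u"
proof -
  have "(\<Sum>i<m. mix m P u i) = (\<Sum>j<m. (\<Sum>i<m. P i j) *\<^sub>R u j)"
    unfolding mix_def by (subst sum.swap) (simp add: scaleR_sum_left)
  also have "\<dots> = (\<Sum>j<m. u j)"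
  proof (rule sum.cong)
    fix j assume j: "j \<in> {..<m}"
    then have "(\<Sum>i<m. P i j) = (\<Sum>i<m. P j i)" using g unfolding gossip_matrix_def
      by (intro sum.cong) auto
    also have "\<dots> = 1" using g j unfolding gossip_matrix_def by blast
    finally show "(\<Sum>i<m. P i j) *\<^sub>R u j = u j" by simp
  qed simp
  finally show ?thesis unfolding avg_def by simp
qed

lemma avg_cong: "(\<And>j. j < m \<Longrightarrow> a j = b j) \<Longrightarrow> avg m a = avg m b"
proof -
  assume h: "\<And>j. j < m \<Longrightarrow> a j = b j"
  have "(\<Sum>j<m. a j) = (\<Sum>j<m. b j)" by (rule sum.cong) (simp_all add: h)
  then show ?thesis unfolding avg_def by simp
qed

lemma dev_cong: "(\<And>j. j < m \<Longrightarrow> a j = b j) \<Longrightarrow> dev m a = dev m b"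
proof -
  assume h: "\<And>j. j < m \<Longrightarrow> a j = b j"
  have av: "avg m a = avg m b" by (rule avg_cong) (simp add: h)
  show ?thesis unfolding dev_def av by (rule sum.cong) (simp_all add: h)
qed

lemma norm_sq_basis: "(norm (x::'a::euclidean_space))\<^sup>2 = (\<Sum>b\<in>Basis. (x \<bullet> b)\<^sup>2)"
proof -
  have "(norm x)\<^sup>2 = x \<bullet> x" by (rule power2_norm_eq_inner)
  also have "\<dots> = (\<Sum>b\<in>Basis. (x \<bullet> b) * (x \<bullet> b))" by (rule euclidean_inner)
  finally show ?thesis by (simp add: power2_eq_square)
qed

lemma norm_add_sq: "(norm (a + b))\<^sup>2 = (norm a)\<^sup>2 + 2 * (a \<bullet> b) + (norm (b::'a::real_inner))\<^sup>2"
  by (simp add: power2_norm_eq_inner inner_add_left inner_add_right inner_commute)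

lemma mix_dev:
  fixes u :: "nat \<Rightarrow> 'a::euclidean_space"
  assumes g: "gossip_matrix m P"
  shows "dev m (mix m P u) \<le> (lam2 m P)\<^sup>2 * dev m u"
proof -
  define ub where "ub = avg m u"
  define d where "d = (\<lambda>j. u j - ub)"
  have rs: "(\<Sum>j<m. P i j) = 1" if "i < m" for i using g that unfolding gossip_matrix_def by blast
  have mi: "mix m P u i - avg m (mix m P u) = (\<Sum>j<m. P i j *\<^sub>R d j)" if "i < m" for i
  proof -
    have "(\<Sum>j<m. P i j *\<^sub>R d j) = mix m P u i - (\<Sum>j<m. P i j) *\<^sub>R ub"
      unfolding d_def mix_def by (simp add: scaleR_diff_right sum_subtractf scaleR_sum_left)
    then show ?thesis using rs[OF that] avg_mix[OF g] unfolding ub_def by simp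
  qed
  have d0: "(\<Sum>j<m. d j \<bullet> b) = 0" for b
  proof -
    have "(\<Sum>j<m. d j \<bullet> b) = (\<Sum>j<m. d j) \<bullet> b" by (simp add: inner_sum_left)
    also have "(\<Sum>j<m. d j) = 0" unfolding d_def ub_def by (rule sum_dev_zero)
    finally show ?thesis by simp
  qed
  have "dev m (mix m P u) = (\<Sum>i<m. (norm (\<Sum>j<m. P i j *\<^sub>R d j))\<^sup>2)"
    unfolding dev_def by (rule sum.cong) (simp_all add: mi)
  also have "\<dots> = (\<Sum>i<m. \<Sum>b\<in>Basis. (pmul m P (\<lambda>j. d j \<bullet> b) i)\<^sup>2)"
    unfolding norm_sq_basis pmul_def by (simp add: inner_sum_left)
  also have "\<dots> = (\<Sum>b\<in>Basis. sqn m (pmul m P (\<lambda>j. d j \<bullet> b)))"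
    unfolding sqn_def by (rule sum.swap)
  also have "\<dots> \<le> (\<Sum>b\<in>(Basis::'a set). (lam2 m P)\<^sup>2 * sqn m (\<lambda>j. d j \<bullet> b))"
    by (intro sum_mono spec_bound[OF g] d0)
  also have "\<dots> = (lam2 m P)\<^sup>2 * (\<Sum>i<m. \<Sum>b\<in>(Basis::'a set). (d i \<bullet> b)\<^sup>2)"
    unfolding sqn_def sum_distrib_left[symmetric] by (subst sum.swap) simp
  also have "\<dots> = (lam2 m P)\<^sup>2 * dev m u"
    unfolding dev_def norm_sq_basis[symmetric] d_def ub_def ..
  finally show ?thesis .
qed

lemma young_norm:
  fixes x y :: "'a::real_inner"
  assumes c: "c > 0"
  shows "(norm (x + y))\<^sup>2 \<le> (1 + c) * (norm x)\<^sup>2 + (1 + 1 / c) * (norm y)\<^sup>2"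
proof -
  have "2 * (x \<bullet> y) \<le> 2 * (norm x * norm y)"
    using Cauchy_Schwarz_ineq2[of x y] by (simp add: abs_le_iff)
  also have "\<dots> \<le> c * (norm x)\<^sup>2 + (norm y)\<^sup>2 / c"
  proof -
    have "0 \<le> (c * norm x - norm y)\<^sup>2 / c" using c by simp
    also have "(c * norm x - norm y)\<^sup>2 / c = c * (norm x)\<^sup>2 + (norm y)\<^sup>2 / c - 2 * (norm x * norm y)"
      using c by (simp add: power2_eq_square field_simps)
    finally show ?thesis by simp
  qed
  finally have "2 * (x \<bullet> y) \<le> c * (norm x)\<^sup>2 + (norm y)\<^sup>2 / c" .
  moreover have "(norm (x + y))\<^sup>2 = (norm x)\<^sup>2 + 2 * (x \<bullet> y) + (norm y)\<^sup>2"
    by (simp add: power2_norm_eq_inner inner_add_left inner_add_right inner_commute)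
  ultimately show ?thesis by (simp add: algebra_simps)
qed

lemma three_norm:
  fixes x y z :: "'a::real_inner"
  shows "(norm (x + y + z))\<^sup>2 \<le> 3 * ((norm x)\<^sup>2 + (norm y)\<^sup>2 + (norm z)\<^sup>2)"
proof -
  have "(norm (x + y + z))\<^sup>2 \<le> (1 + 1/2) * (norm (x + y))\<^sup>2 + (1 + 1 / (1/2)) * (norm z)\<^sup>2"
    by (rule young_norm) simp
  moreover have "(norm (x + y))\<^sup>2 \<le> (1 + 1) * (norm x)\<^sup>2 + (1 + 1 / 1) * (norm y)\<^sup>2"
    by (rule young_norm) simp
  ultimately show ?thesis by simp
qed

lemma avg_add: "avg m (\<lambda>i. a i + b i) = avg m a + avg m b"
  unfolding avg_def by (simp add: sum.distrib scaleR_add_right)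

lemma avg_scale: "avg m (\<lambda>i. k *\<^sub>R a i) = k *\<^sub>R avg m a"
  unfolding avg_def by (simp add: scaleR_sum_right)

lemma dev_add:
  fixes a b :: "nat \<Rightarrow> 'a::real_inner"
  assumes c: "c > 0"
  shows "dev m (\<lambda>i. a i + b i) \<le> (1 + c) * dev m a + (1 + 1 / c) * dev m b"
proof -
  have "dev m (\<lambda>i. a i + b i) = (\<Sum>i<m. (norm ((a i - avg m a) + (b i - avg m b)))\<^sup>2)"
    unfolding dev_def avg_add by (simp add: algebra_simps)
  also have "\<dots> \<le> (\<Sum>i<m. (1 + c) * (norm (a i - avg m a))\<^sup>2 + (1 + 1 / c) * (norm (b i - avg m b))\<^sup>2)"
    by (intro sum_mono young_norm c)
  also have "\<dots> = (1 + c) * dev m a + (1 + 1 / c) * dev m b"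
    unfolding dev_def by (simp add: sum.distrib sum_distrib_left)
  finally show ?thesis .
qed

lemma dev_scale: "dev m (\<lambda>i. k *\<^sub>R a i) = k\<^sup>2 * dev m a"
  unfolding dev_def avg_scale
  by (simp add: scaleR_diff_right[symmetric] power_mult_distrib sum_distrib_left)

lemma dev_le_any:
  fixes u :: "nat \<Rightarrow> 'a::real_inner"
  shows "dev m u \<le> (\<Sum>i<m. (norm (u i - c))\<^sup>2)"
proof -
  have "(\<Sum>i<m. (norm (u i - c))\<^sup>2) = (\<Sum>i<m. (norm ((u i - avg m u) + (avg m u - c)))\<^sup>2)"
    by simp
  also have "\<dots> = (\<Sum>i<m. (norm (u i - avg m u))\<^sup>2 + 2 * ((u i - avg m u) \<bullet> (avg m u - c)) + (norm (avg m u - c))\<^sup>2)"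
    by (intro sum.cong refl) (rule norm_add_sq)
  also have "\<dots> = dev m u + 2 * ((\<Sum>i<m. u i - avg m u) \<bullet> (avg m u - c)) + real m * (norm (avg m u - c))\<^sup>2"
    unfolding dev_def by (simp add: sum.distrib inner_sum_left sum_distrib_left)
  also have "\<dots> \<ge> dev m u" unfolding sum_dev_zero by simp
  finally show ?thesis .
qed

lemma sum_real_1_to: "(\<Sum>s=1..t. real s) = real t * (real t + 1) / 2"
  by (induction t) (simp_all add: field_simps)

lemma delta_props:
  assumes t: "t \<ge> 1"
  defines "\<delta> \<equiv> real t / (\<Sum>s=1..t. real s)"
  shows "0 \<le> \<delta>" "\<delta> \<le> 1" "\<delta> * real t \<le> 2" "\<delta>\<^sup>2 * (real t)\<^sup>2 \<le> 4"
proof -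
  have tp: "real t > 0" "real t + 1 > 0" using t by simp_all
  have d: "\<delta> = 2 / (real t + 1)" unfolding \<delta>_def sum_real_1_to
  proof -
    have "real t / (real t * (real t + 1) / 2) = (real t * 2) / (real t * (real t + 1))"
      by simp
    also have "\<dots> = 2 / (real t + 1)" using tp by (rule_tac mult_divide_mult_cancel_left) simp
    finally show "real t / (real t * (real t + 1) / 2) = 2 / (real t + 1)" .
  qed
  show "0 \<le> \<delta>" unfolding d by simp
  show "\<delta> \<le> 1" unfolding d using t by simp
  show dt: "\<delta> * real t \<le> 2" unfolding d by (simp add: field_simps)
  have "0 \<le> \<delta> * real t" unfolding d by simp
  from power_mono[OF dt this, of 2] have "(\<delta> * real t)\<^sup>2 \<le> 2\<^sup>2" .
  then show "\<delta>\<^sup>2 * (real t)\<^sup>2 \<le> 4" by (simp add: power_mult_distrib)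
qed

lemma rho_facts:
  assumes g: "gossip_matrix m P"
  shows "0 < spectral_gap m P" "spectral_gap m P \<le> 1" "lam2 m P = 1 - spectral_gap m P"
  using lam2_nonneg[of m P] lam2_lt1[OF g] unfolding lam2_def by auto

lemma lam_coef:
  fixes \<rho> :: real
  assumes "0 < \<rho>" "\<rho> \<le> 1"
  shows "(1 - \<rho>)\<^sup>2 * (1 + \<rho>) \<le> 1 - \<rho>" "(1 - \<rho>)\<^sup>2 * (1 + 1 / \<rho>) \<le> 1 / \<rho>"
proof -
  have a: "(1 - \<rho>)\<^sup>2 * (1 + \<rho>) = (1 - \<rho>) * (1 - \<rho>\<^sup>2)" by (simp add: power2_eq_square algebra_simps)
  have "(1 - \<rho>) * (1 - \<rho>\<^sup>2) \<le> (1 - \<rho>) * 1"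
    using assms by (intro mult_left_mono) auto
  then show "(1 - \<rho>)\<^sup>2 * (1 + \<rho>) \<le> 1 - \<rho>" using a by simp
  have "(1 - \<rho>)\<^sup>2 * (1 + 1 / \<rho>) = ((1 - \<rho>)\<^sup>2 * (1 + \<rho>)) / \<rho>" using assms by (simp add: field_simps)
  also have "\<dots> \<le> (1 - \<rho>) / \<rho>" using \<open>(1 - \<rho>)\<^sup>2 * (1 + \<rho>) \<le> 1 - \<rho>\<close> assms
    by (simp add: divide_right_mono)
  also have "\<dots> \<le> 1 / \<rho>" using assms by (simp add: divide_right_mono)
  finally show "(1 - \<rho>)\<^sup>2 * (1 + 1 / \<rho>) \<le> 1 / \<rho>" .
qed

lemma grad_dev_bound:
  fixes x :: "nat \<Rightarrow> 'a::euclidean_space" and g :: "nat \<Rightarrow> 'a"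
  assumes m: "m \<ge> 1"
    and smooth: "\<And>i x y. i < m \<Longrightarrow> norm (gf i x - gf i y) \<le> L * norm (x - y)"
    and L: "L > 0"
    and hetero: "\<And>x. (1 / real m) * (\<Sum>i<m. (norm (gf i x - (1 / real m) *\<^sub>R (\<Sum>j<m. gf j x)))\<^sup>2) \<le> \<zeta>\<^sup>2"
  shows "dev m g \<le> 3 * (\<Sum>i<m. (norm (g i - gf i (x i)))\<^sup>2) + 3 * L\<^sup>2 * dev m x + 3 * real m * \<zeta>\<^sup>2"
proof -
  define xb where "xb = avg m x"
  define c where "c = (1 / real m) *\<^sub>R (\<Sum>j<m. gf j xb)"
  have "dev m g \<le> (\<Sum>i<m. (norm (g i - c))\<^sup>2)" by (rule dev_le_any)
  also have "\<dots> \<le> (\<Sum>i<m. 3 * ((norm (g i - gf i (x i)))\<^sup>2 + (norm (gf i (x i) - gf i xb))\<^sup>2 + (norm (gf i xb - c))\<^sup>2))"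
  proof (rule sum_mono)
    fix i
    have "g i - c = (g i - gf i (x i)) + (gf i (x i) - gf i xb) + (gf i xb - c)" by simp
    then show "(norm (g i - c))\<^sup>2 \<le> 3 * ((norm (g i - gf i (x i)))\<^sup>2 + (norm (gf i (x i) - gf i xb))\<^sup>2 + (norm (gf i xb - c))\<^sup>2)"
      using three_norm[of "g i - gf i (x i)" "gf i (x i) - gf i xb" "gf i xb - c"] by simp
  qed
  also have "\<dots> = 3 * (\<Sum>i<m. (norm (g i - gf i (x i)))\<^sup>2) + 3 * (\<Sum>i<m. (norm (gf i (x i) - gf i xb))\<^sup>2)
      + 3 * (\<Sum>i<m. (norm (gf i xb - c))\<^sup>2)"
    by (simp add: sum.distrib sum_distrib_left algebra_simps)
  also have "(\<Sum>i<m. (norm (gf i (x i) - gf i xb))\<^sup>2) \<le> L\<^sup>2 * dev m x"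
  proof -
    have "(\<Sum>i<m. (norm (gf i (x i) - gf i xb))\<^sup>2) \<le> (\<Sum>i<m. L\<^sup>2 * (norm (x i - xb))\<^sup>2)"
    proof (rule sum_mono)
      fix i assume "i \<in> {..<m}"
      then have "norm (gf i (x i) - gf i xb) \<le> L * norm (x i - xb)" using smooth by simp
      then have "(norm (gf i (x i) - gf i xb))\<^sup>2 \<le> (L * norm (x i - xb))\<^sup>2"
        by (intro power_mono) simp_all
      then show "(norm (gf i (x i) - gf i xb))\<^sup>2 \<le> L\<^sup>2 * (norm (x i - xb))\<^sup>2"
        by (simp add: power_mult_distrib)
    qed
    also have "\<dots> = L\<^sup>2 * dev m x" unfolding dev_def xb_def by (simp add: sum_distrib_left)
    finally show ?thesis .
  qed
  also have "(\<Sum>i<m. (norm (gf i xb - c))\<^sup>2) \<le> real m * \<zeta>\<^sup>2"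
  proof -
    have "(1 / real m) * (\<Sum>i<m. (norm (gf i xb - c))\<^sup>2) \<le> \<zeta>\<^sup>2" unfolding c_def by (rule hetero)
    then show ?thesis using m by (simp add: field_simps)
  qed
  finally show ?thesis by simp
qed

lemma round_bound:
  fixes w x :: "nat \<Rightarrow> 'a::euclidean_space" and G :: "nat \<Rightarrow> 'a \<Rightarrow> 'z \<Rightarrow> 'a"
    and zt :: "nat \<Rightarrow> 'z" and gf :: "nat \<Rightarrow> 'a \<Rightarrow> 'a"
  assumes g: "gossip_matrix m P" and t: "t \<ge> 1" and m: "m \<ge> 1"
    and smooth: "\<And>i x y. i < m \<Longrightarrow> norm (gf i x - gf i y) \<le> L * norm (x - y)"
    and L: "L > 0"
    and hetero: "\<And>x. (1 / real m) * (\<Sum>i<m. (norm (gf i x - (1 / real m) *\<^sub>R (\<Sum>j<m. gf j x)))\<^sup>2) \<le> \<zeta>\<^sup>2"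
  defines "\<rho> \<equiv> spectral_gap m P"
    and "\<delta> \<equiv> real t / (\<Sum>s=1..t. real s)"
    and "B \<equiv> (\<Sum>i<m. (norm (G i (x i) (zt i) - gf i (x i)))\<^sup>2) + L\<^sup>2 * dev m x + real m * \<zeta>\<^sup>2"
  shows "dev m (fst (dat_round m P G \<eta> real t zt (w, x)))
           \<le> (1 - \<rho>) * dev m w + (3 * \<eta>\<^sup>2 * (real t)\<^sup>2 / \<rho>) * B"
    and "dev m (snd (dat_round m P G \<eta> real t zt (w, x)))
           \<le> (1 - \<rho>) * dev m x + (2 * \<delta>\<^sup>2 / \<rho>) * dev m w + (24 * \<eta>\<^sup>2 / \<rho>\<^sup>2) * B"
proof -
  define gg where "gg = (\<lambda>i. G i (x i) (zt i))"
  define wh where "wh = (\<lambda>i. w i - (\<eta> * real t) *\<^sub>R gg i)"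
  define xh where "xh = (\<lambda>i. (1 - \<delta>) *\<^sub>R x i + \<delta> *\<^sub>R wh i)"
  have fw: "fst (dat_round m P G \<eta> real t zt (w, x)) = mix m P wh"
    unfolding dat_round_def Let_def mix_def wh_def gg_def by simp
  have fx: "snd (dat_round m P G \<eta> real t zt (w, x)) = mix m P xh"
    unfolding dat_round_def Let_def mix_def xh_def wh_def gg_def \<delta>_def by simp
  note rf = rho_facts[OF g, folded \<rho>_def]
  have r0: "0 < \<rho>" and r1: "\<rho> \<le> 1" using rf by auto
  have lam: "(lam2 m P)\<^sup>2 = (1 - \<rho>)\<^sup>2" using rf by simp
  note lc = lam_coef[OF r0 r1]
  note dp = delta_props[OF t, folded \<delta>_def]
  define W where "W = dev m w"
  define X where "X = dev m x"
  define D where "D = dev m gg"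
  have W0: "W \<ge> 0" and X0: "X \<ge> 0" and D0: "D \<ge> 0" unfolding W_def X_def D_def by (simp_all add: dev_nonneg)
  have DB: "D \<le> 3 * B"
    using grad_dev_bound[OF m smooth L hetero, of gg x] unfolding D_def B_def gg_def by simp
  have B0: "B \<ge> 0" using DB D0 by simp
  define e where "e = (\<eta> * real t)\<^sup>2"
  have e0: "e \<ge> 0" unfolding e_def by simp
  have whd: "dev m wh \<le> (1 + \<rho>) * W + (1 + 1 / \<rho>) * (e * D)"
  proof -
    have "dev m wh = dev m (\<lambda>i. w i + (- (\<eta> * real t)) *\<^sub>R gg i)" unfolding wh_def by simp
    also have "\<dots> \<le> (1 + \<rho>) * dev m w + (1 + 1 / \<rho>) * dev m (\<lambda>i. (- (\<eta> * real t)) *\<^sub>R gg i)"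
      by (rule dev_add[OF r0])
    also have "dev m (\<lambda>i. (- (\<eta> * real t)) *\<^sub>R gg i) = e * D"
      unfolding dev_scale e_def D_def by simp
    finally show ?thesis unfolding W_def .
  qed
  have WH0: "dev m wh \<ge> 0" by (rule dev_nonneg)
  show "dev m (fst (dat_round m P G \<eta> real t zt (w, x))) \<le> (1 - \<rho>) * dev m w + (3 * \<eta>\<^sup>2 * (real t)\<^sup>2 / \<rho>) * B"
  proof -
    have "dev m (mix m P wh) \<le> (1 - \<rho>)\<^sup>2 * dev m wh" using mix_dev[OF g, of wh] lam by simp
    also have "\<dots> \<le> (1 - \<rho>)\<^sup>2 * ((1 + \<rho>) * W + (1 + 1 / \<rho>) * (e * D))"
      by (rule mult_left_mono[OF whd]) simp
    also have "\<dots> = ((1 - \<rho>)\<^sup>2 * (1 + \<rho>)) * W + ((1 - \<rho>)\<^sup>2 * (1 + 1 / \<rho>)) * (e * D)"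
      by (simp add: algebra_simps)
    also have "\<dots> \<le> (1 - \<rho>) * W + (1 / \<rho>) * (e * D)"
      using lc W0 e0 D0 by (intro add_mono mult_right_mono) simp_all
    also have "\<dots> \<le> (1 - \<rho>) * W + (1 / \<rho>) * (e * (3 * B))"
      using r0 e0 DB by (intro add_left_mono mult_left_mono) simp_all
    also have "\<dots> = (1 - \<rho>) * W + (3 * \<eta>\<^sup>2 * (real t)\<^sup>2 / \<rho>) * B"
      unfolding e_def by (simp add: power_mult_distrib)
    finally show ?thesis unfolding fw W_def .
  qed
  show "dev m (snd (dat_round m P G \<eta> real t zt (w, x))) \<le> (1 - \<rho>) * dev m x + (2 * \<delta>\<^sup>2 / \<rho>) * dev m w + (24 * \<eta>\<^sup>2 / \<rho>\<^sup>2) * B"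
  proof -
    have xhd: "dev m xh \<le> (1 + \<rho>) * ((1 - \<delta>)\<^sup>2 * X) + (1 + 1 / \<rho>) * (\<delta>\<^sup>2 * dev m wh)"
    proof -
      have "dev m xh \<le> (1 + \<rho>) * dev m (\<lambda>i. (1 - \<delta>) *\<^sub>R x i) + (1 + 1 / \<rho>) * dev m (\<lambda>i. \<delta> *\<^sub>R wh i)"
        unfolding xh_def by (rule dev_add[OF r0])
      then show ?thesis unfolding dev_scale X_def .
    qed
    have d1: "(1 - \<delta>)\<^sup>2 \<le> 1" using dp by (simp add: power_le_one)
    have "dev m (mix m P xh) \<le> (1 - \<rho>)\<^sup>2 * dev m xh" using mix_dev[OF g, of xh] lam by simp
    also have "\<dots> \<le> (1 - \<rho>)\<^sup>2 * ((1 + \<rho>) * ((1 - \<delta>)\<^sup>2 * X) + (1 + 1 / \<rho>) * (\<delta>\<^sup>2 * dev m wh))"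
      by (rule mult_left_mono[OF xhd]) simp
    also have "\<dots> = ((1 - \<rho>)\<^sup>2 * (1 + \<rho>)) * ((1 - \<delta>)\<^sup>2 * X) + ((1 - \<rho>)\<^sup>2 * (1 + 1 / \<rho>)) * (\<delta>\<^sup>2 * dev m wh)"
      by (simp add: algebra_simps)
    also have "\<dots> \<le> (1 - \<rho>) * ((1 - \<delta>)\<^sup>2 * X) + (1 / \<rho>) * (\<delta>\<^sup>2 * dev m wh)"
      using lc X0 WH0 by (intro add_mono mult_right_mono) simp_all
    also have "(1 - \<rho>) * ((1 - \<delta>)\<^sup>2 * X) \<le> (1 - \<rho>) * X"
      using r1 X0 d1 by (intro mult_left_mono) (simp_all add: mult_left_le_one_le)
    also have "(1 / \<rho>) * (\<delta>\<^sup>2 * dev m wh) \<le> (1 / \<rho>) * (\<delta>\<^sup>2 * ((1 + \<rho>) * W + (1 + 1 / \<rho>) * (e * D)))"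
      using r0 whd by (intro mult_left_mono) simp_all
    also have "(1 / \<rho>) * (\<delta>\<^sup>2 * ((1 + \<rho>) * W + (1 + 1 / \<rho>) * (e * D)))
        = ((1 + \<rho>) / \<rho>) * \<delta>\<^sup>2 * W + ((1 + 1 / \<rho>) / \<rho>) * (\<delta>\<^sup>2 * e) * D"
      using r0 by (simp add: field_simps)
    also have "\<dots> \<le> (2 / \<rho>) * \<delta>\<^sup>2 * W + (2 / \<rho>\<^sup>2) * (4 * \<eta>\<^sup>2) * (3 * B)"
    proof -
      have f1: "(1 + \<rho>) / \<rho> \<le> 2 / \<rho>" using r0 r1 by (simp add: divide_right_mono)
      have f2: "(1 + 1 / \<rho>) / \<rho> \<le> 2 / \<rho>\<^sup>2"
      proof -
        have "1 + 1 / \<rho> \<le> 2 / \<rho>" using r0 r1 by (simp add: field_simps)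
        then have "(1 + 1 / \<rho>) / \<rho> \<le> (2 / \<rho>) / \<rho>" using r0 by (intro divide_right_mono) simp_all
        also have "(2 / \<rho>) / \<rho> = 2 / \<rho>\<^sup>2" by (simp add: power2_eq_square)
        finally show ?thesis .
      qed
      have f3: "\<delta>\<^sup>2 * e \<le> 4 * \<eta>\<^sup>2"
      proof -
        have "\<delta>\<^sup>2 * e = (\<delta>\<^sup>2 * (real t)\<^sup>2) * \<eta>\<^sup>2" unfolding e_def by (simp add: power_mult_distrib)
        also have "\<dots> \<le> 4 * \<eta>\<^sup>2" using dp(4) by (intro mult_right_mono) simp_all
        finally show ?thesis .
      qed
      have i1: "((1 + \<rho>) / \<rho>) * \<delta>\<^sup>2 * W \<le> (2 / \<rho>) * \<delta>\<^sup>2 * W"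
        using f1 W0 by (intro mult_right_mono) simp_all
      have i2a: "((1 + 1 / \<rho>) / \<rho>) * (\<delta>\<^sup>2 * e) \<le> (2 / \<rho>\<^sup>2) * (4 * \<eta>\<^sup>2)"
        using r0 e0 by (intro mult_mono[OF f2 f3]) simp_all
      have i2: "((1 + 1 / \<rho>) / \<rho>) * (\<delta>\<^sup>2 * e) * D \<le> (2 / \<rho>\<^sup>2) * (4 * \<eta>\<^sup>2) * (3 * B)"
        using D0 r0 by (intro mult_mono[OF i2a DB]) simp_all
      show ?thesis using i1 i2 by (rule add_mono)
    qed
    also have "(2 / \<rho>) * \<delta>\<^sup>2 * W + (2 / \<rho>\<^sup>2) * (4 * \<eta>\<^sup>2) * (3 * B) = (2 * \<delta>\<^sup>2 / \<rho>) * W + (24 * \<eta>\<^sup>2 / \<rho>\<^sup>2) * B"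
      by (simp add: algebra_simps)
    finally show ?thesis unfolding fx W_def X_def by simp
  qed
qed

lemma dat_round_fst: "fst (dat_round m P G \<eta> \<alpha> t zt wx) i =
   (\<Sum>j<m. P i j *\<^sub>R (fst wx j - (\<eta> * \<alpha> t) *\<^sub>R G j (snd wx j) (zt j)))"
  by (simp add: dat_round_def Let_def)

lemma dat_round_snd: "snd (dat_round m P G \<eta> \<alpha> t zt wx) i =
   (\<Sum>j<m. P i j *\<^sub>R ((1 - \<alpha> t / (\<Sum>s=1..t. \<alpha> s)) *\<^sub>R snd wx j +
       (\<alpha> t / (\<Sum>s=1..t. \<alpha> s)) *\<^sub>R (fst wx j - (\<eta> * \<alpha> t) *\<^sub>R G j (snd wx j) (zt j))))"
  by (simp add: dat_round_def Let_def)

lemma state_local: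
  assumes "\<And>s j. 1 \<le> s \<Longrightarrow> s \<le> n \<Longrightarrow> j < m \<Longrightarrow> z s j = z' s j"
  shows "\<forall>i<m. fst (dat_state m P G \<eta> \<alpha> w1 z n) i = fst (dat_state m P G \<eta> \<alpha> w1 z' n) i \<and>
               snd (dat_state m P G \<eta> \<alpha> w1 z n) i = snd (dat_state m P G \<eta> \<alpha> w1 z' n) i"
  using assms
proof (induction n)
  case 0
  then show ?case by simp
next
  case (Suc n)
  have IH: "\<forall>i<m. fst (dat_state m P G \<eta> \<alpha> w1 z n) i = fst (dat_state m P G \<eta> \<alpha> w1 z' n) i \<and>
               snd (dat_state m P G \<eta> \<alpha> w1 z n) i = snd (dat_state m P G \<eta> \<alpha> w1 z' n) i"
    using Suc.prems by (intro Suc.IH) auto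
  have zz: "\<And>j. j < m \<Longrightarrow> z (Suc n) j = z' (Suc n) j" using Suc.prems by simp
  show ?case
    unfolding dat_state.simps dat_round_fst dat_round_snd
    using IH zz by (auto intro!: sum.cong)
qed

lemma state_meas:
  fixes G :: "nat \<Rightarrow> 'a::euclidean_space \<Rightarrow> 'z \<Rightarrow> 'a"
  assumes Gm: "\<And>i. i < m \<Longrightarrow> (\<lambda>(x, z). G i x z) \<in> borel_measurable (borel \<Otimes>\<^sub>M D i)"
    and zm: "\<And>s j. 1 \<le> s \<Longrightarrow> s \<le> n \<Longrightarrow> j < m \<Longrightarrow> (\<lambda>\<omega>. zz \<omega> s j) \<in> measurable M (D j)"
  shows "\<forall>i<m. (\<lambda>\<omega>. fst (dat_state m P G \<eta> \<alpha> w1 (zz \<omega>) n) i) \<in> borel_measurable M \<and>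
               (\<lambda>\<omega>. snd (dat_state m P G \<eta> \<alpha> w1 (zz \<omega>) n) i) \<in> borel_measurable M"
  using zm
proof (induction n)
  case 0
  then show ?case by simp
next
  case (Suc n)
  have IH: "\<forall>i<m. (\<lambda>\<omega>. fst (dat_state m P G \<eta> \<alpha> w1 (zz \<omega>) n) i) \<in> borel_measurable M \<and>
               (\<lambda>\<omega>. snd (dat_state m P G \<eta> \<alpha> w1 (zz \<omega>) n) i) \<in> borel_measurable M"
    using Suc.prems by (intro Suc.IH) auto
  have Gc: "(\<lambda>\<omega>. G j (snd (dat_state m P G \<eta> \<alpha> w1 (zz \<omega>) n) j) (zz \<omega> (Suc n) j)) \<in> borel_measurable M"
    if j: "j < m" for j
  proof -
    have "(\<lambda>\<omega>. (snd (dat_state m P G \<eta> \<alpha> w1 (zz \<omega>) n) j, zz \<omega> (Suc n) j)) \<in> measurable M (borel \<Otimes>\<^sub>M D j)"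
      using IH j Suc.prems[of "Suc n" j] by (intro measurable_Pair) auto
    from measurable_compose[OF this Gm[OF j]] show ?thesis by simp
  qed
  show ?case
  proof (intro allI impI conjI)
    fix i assume "i < m"
    show "(\<lambda>\<omega>. fst (dat_state m P G \<eta> \<alpha> w1 (zz \<omega>) (Suc n)) i) \<in> borel_measurable M"
      unfolding dat_state.simps dat_round_fst
      using IH Gc by (intro borel_measurable_sum borel_measurable_scaleR borel_measurable_diff borel_measurable_const) auto
    show "(\<lambda>\<omega>. snd (dat_state m P G \<eta> \<alpha> w1 (zz \<omega>) (Suc n)) i) \<in> borel_measurable M"
      unfolding dat_state.simps dat_round_snd
      using IH Gc by (intro borel_measurable_sum borel_measurable_scaleR borel_measurable_diff
          borel_measurable_add borel_measurable_const) auto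
  qed
qed

lemma lipschitz_cont:
  fixes f :: "'a::real_normed_vector \<Rightarrow> 'b::real_normed_vector"
  assumes "\<And>x y. norm (f x - f y) \<le> L * norm (x - y)" and "L > 0"
  shows "continuous_on UNIV f"
proof (rule lipschitz_on_continuous_on)
  show "L-lipschitz_on UNIV f"
    by (rule lipschitz_onI) (use assms in \<open>auto simp: dist_norm\<close>)
qed

lemma noise_bound:
  fixes G :: "nat \<Rightarrow> 'a::euclidean_space \<Rightarrow> 'z \<Rightarrow> 'a" and Z :: "nat \<Rightarrow> nat \<Rightarrow> 'w \<Rightarrow> 'z"
    and gf :: "nat \<Rightarrow> 'a \<Rightarrow> 'a" and D :: "nat \<Rightarrow> 'z measure"
  assumes \<Omega>: "prob_space \<Omega>"
    and D_prob: "\<And>i. i < m \<Longrightarrow> prob_space (D i)"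
    and G_meas: "\<And>i. i < m \<Longrightarrow> (\<lambda>(x, z). G i x z) \<in> borel_measurable (borel \<Otimes>\<^sub>M D i)"
    and gfc: "\<And>i. i < m \<Longrightarrow> continuous_on UNIV (gf i)"
    and variance: "\<And>i x. i < m \<Longrightarrow>
                    (\<integral>\<^sup>+ z. ennreal ((norm (G i x z - gf i x))\<^sup>2) \<partial>D i) \<le> ennreal (\<sigma>\<^sup>2)"
    and Z_indep: "prob_space.indep_vars \<Omega> (\<lambda>(t, i). D i) (\<lambda>(t, i). Z t i) ({1..} \<times> {..<m})"
    and Z_distr: "\<And>t i. t \<ge> 1 \<Longrightarrow> i < m \<Longrightarrow> distr \<Omega> (D i) (Z t i) = D i"
    and t: "t \<ge> 1" and i: "i < m"
  shows "(\<integral>\<^sup>+ \<omega>. ennreal ((norm (G i (snd (dat_state m P G \<eta> \<alpha> w1 (\<lambda>t i. Z t i \<omega>) (t - 1)) i) (Z t i \<omega>)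
            - gf i (snd (dat_state m P G \<eta> \<alpha> w1 (\<lambda>t i. Z t i \<omega>) (t - 1)) i)))\<^sup>2) \<partial>\<Omega>) \<le> ennreal (\<sigma>\<^sup>2)"
proof -
  interpret prob_space \<Omega> by (rule \<Omega>)
  define X where "X = (\<lambda>\<omega>. snd (dat_state m P G \<eta> \<alpha> w1 (\<lambda>t i. Z t i \<omega>) (t - 1)) i)"
  define M' where "M' = (\<lambda>(t::nat, i::nat). D i)"
  define XX where "XX = (\<lambda>(t::nat, i::nat). Z t i)"
  define A where "A = {1..<t} \<times> {..<m}"
  define B where "B = {(t, i)}"
  have ind: "indep_var (PiM A M') (\<lambda>\<omega>. restrict (\<lambda>p. XX p \<omega>) A) (PiM B M') (\<lambda>\<omega>. restrict (\<lambda>p. XX p \<omega>) B)"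
    using Z_indep i t unfolding M'_def XX_def A_def B_def
    by (intro indep_var_restrict) auto
  define \<Phi> where "\<Phi> = (\<lambda>f. snd (dat_state m P G \<eta> \<alpha> w1 (\<lambda>s j. f (s, j)) (t - 1)) i)"
  have \<Phi>m: "\<Phi> \<in> borel_measurable (PiM A M')"
  proof -
    have "\<forall>i<m. (\<lambda>f. fst (dat_state m P G \<eta> \<alpha> w1 ((\<lambda>f s j. f (s, j)) f) (t - 1)) i) \<in> borel_measurable (PiM A M') \<and>
               (\<lambda>f. snd (dat_state m P G \<eta> \<alpha> w1 ((\<lambda>f s j. f (s, j)) f) (t - 1)) i) \<in> borel_measurable (PiM A M')"
    proof (rule state_meas[OF G_meas])
      fix s j assume "1 \<le> s" "s \<le> t - 1" "j < m"
      then have sj: "(s, j) \<in> A" unfolding A_def by auto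
      have "(\<lambda>f. f (s, j)) \<in> measurable (PiM A M') (M' (s, j))" by (rule measurable_component_singleton[OF sj])
      then show "(\<lambda>f. (\<lambda>f s j. f (s, j)) f s j) \<in> measurable (PiM A M') (D j)" unfolding M'_def by simp
    qed
    then show ?thesis unfolding \<Phi>_def using i by blast
  qed
  have Y2m: "(\<lambda>f. f (t, i)) \<in> measurable (PiM B M') (D i)"
  proof -
    have "(\<lambda>f. f (t, i)) \<in> measurable (PiM B M') (M' (t, i))"
      by (rule measurable_component_singleton) (simp add: B_def)
    then show ?thesis unfolding M'_def by simp
  qed
  have eq1: "\<Phi> (restrict (\<lambda>p. XX p \<omega>) A) = X \<omega>" for \<omega>
  proof -
    have "\<forall>i<m. fst (dat_state m P G \<eta> \<alpha> w1 (\<lambda>s j. restrict (\<lambda>p. XX p \<omega>) A (s, j)) (t - 1)) i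
              = fst (dat_state m P G \<eta> \<alpha> w1 (\<lambda>t i. Z t i \<omega>) (t - 1)) i \<and>
             snd (dat_state m P G \<eta> \<alpha> w1 (\<lambda>s j. restrict (\<lambda>p. XX p \<omega>) A (s, j)) (t - 1)) i
              = snd (dat_state m P G \<eta> \<alpha> w1 (\<lambda>t i. Z t i \<omega>) (t - 1)) i"
      by (rule state_local) (auto simp: A_def XX_def)
    then show ?thesis unfolding \<Phi>_def X_def using i by simp
  qed
  define RA where "RA = (\<lambda>\<omega>. restrict (\<lambda>p. XX p \<omega>) A)"
  define RB where "RB = (\<lambda>\<omega>. restrict (\<lambda>p. XX p \<omega>) B)"
  have RAm: "RA \<in> measurable \<Omega> (PiM A M')" and RBm: "RB \<in> measurable \<Omega> (PiM B M')"
    and prod: "distr \<Omega> (PiM A M') RA \<Otimes>\<^sub>M distr \<Omega> (PiM B M') RB = distr \<Omega> (PiM A M' \<Otimes>\<^sub>M PiM B M') (\<lambda>x. (RA x, RB x))"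
    using ind unfolding RA_def RB_def using indep_var_distribution_eq by auto
  have Zm: "Z t i \<in> measurable \<Omega> (D i)"
    using Z_indep t i unfolding indep_vars_def by auto
  define h where "h = (\<lambda>p. ennreal ((norm ((\<lambda>(x, z). G i x z) p - gf i (fst p)))\<^sup>2))"
  have gfm: "gf i \<in> borel_measurable borel" by (rule borel_measurable_continuous_onI[OF gfc[OF i]])
  have hm: "h \<in> borel_measurable (borel \<Otimes>\<^sub>M D i)"
  proof -
    have "(\<lambda>p. gf i (fst p)) \<in> borel_measurable (borel \<Otimes>\<^sub>M D i)"
      by (rule measurable_compose[OF measurable_fst gfm])
    then show ?thesis unfolding h_def using G_meas[OF i] by measurable
  qed
  define k where "k = (\<lambda>p. h (\<Phi> (fst p), snd p (t, i)))"
  have km: "k \<in> borel_measurable (PiM A M' \<Otimes>\<^sub>M PiM B M')"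
  proof -
    have "(\<lambda>p. (\<Phi> (fst p), snd p (t, i))) \<in> measurable (PiM A M' \<Otimes>\<^sub>M PiM B M') (borel \<Otimes>\<^sub>M D i)"
    proof (rule measurable_Pair)
      show "(\<lambda>p. \<Phi> (fst p)) \<in> borel_measurable (PiM A M' \<Otimes>\<^sub>M PiM B M')"
        by (rule measurable_compose[OF measurable_fst \<Phi>m])
      show "(\<lambda>p. snd p (t, i)) \<in> measurable (PiM A M' \<Otimes>\<^sub>M PiM B M') (D i)"
        by (rule measurable_compose[OF measurable_snd Y2m])
    qed
    from measurable_compose[OF this hm] show ?thesis unfolding k_def by simp
  qed
  have pm: "(\<lambda>x. (RA x, RB x)) \<in> measurable \<Omega> (PiM A M' \<Otimes>\<^sub>M PiM B M')"
    using RAm RBm by (rule measurable_Pair)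
  have pB: "prob_space (distr \<Omega> (PiM B M') RB)" by (rule prob_space_distr[OF RBm])
  have pA: "prob_space (distr \<Omega> (PiM A M') RA)" by (rule prob_space_distr[OF RAm])
  have sB: "sigma_finite_measure (distr \<Omega> (PiM B M') RB)"
    using pB by (simp add: prob_space_imp_sigma_finite)
  have inner: "(\<integral>\<^sup>+ g. k (f, g) \<partial>distr \<Omega> (PiM B M') RB) \<le> ennreal (\<sigma>\<^sup>2)" for f
  proof -
    have c1: "(\<lambda>g. h (\<Phi> f, g (t, i))) \<in> borel_measurable (PiM B M')"
    proof -
      have "(\<lambda>g. (\<Phi> f, g (t, i))) \<in> measurable (PiM B M') (borel \<Otimes>\<^sub>M D i)"
        using Y2m by (intro measurable_Pair) simp_all
      from measurable_compose[OF this hm] show ?thesis .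
    qed
    have c2: "(\<lambda>z. h (\<Phi> f, z)) \<in> borel_measurable (D i)"
    proof -
      have "(\<lambda>z. (\<Phi> f, z)) \<in> measurable (D i) (borel \<Otimes>\<^sub>M D i)"
        by (intro measurable_Pair) simp_all
      from measurable_compose[OF this hm] show ?thesis .
    qed
    have "(\<integral>\<^sup>+ g. k (f, g) \<partial>distr \<Omega> (PiM B M') RB) = (\<integral>\<^sup>+ \<omega>. h (\<Phi> f, RB \<omega> (t, i)) \<partial>\<Omega>)"
      unfolding k_def using RBm c1 by (simp add: nn_integral_distr)
    also have "\<dots> = (\<integral>\<^sup>+ \<omega>. h (\<Phi> f, Z t i \<omega>) \<partial>\<Omega>)"
      unfolding RB_def B_def XX_def by simp
    also have "\<dots> = (\<integral>\<^sup>+ z. h (\<Phi> f, z) \<partial>distr \<Omega> (D i) (Z t i))"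
      using Zm c2 by (simp add: nn_integral_distr)
    also have "\<dots> = (\<integral>\<^sup>+ z. h (\<Phi> f, z) \<partial>D i)" unfolding Z_distr[OF t i] ..
    also have "\<dots> \<le> ennreal (\<sigma>\<^sup>2)" using variance[OF i, of "\<Phi> f"] unfolding h_def by simp
    finally show ?thesis .
  qed
  have "(\<integral>\<^sup>+ \<omega>. h (X \<omega>, Z t i \<omega>) \<partial>\<Omega>) = (\<integral>\<^sup>+ \<omega>. k (RA \<omega>, RB \<omega>) \<partial>\<Omega>)"
    using eq1 unfolding k_def RA_def RB_def B_def XX_def by (simp add: fun_eq_iff)
  also have "\<dots> = (\<integral>\<^sup>+ p. k p \<partial>distr \<Omega> (PiM A M' \<Otimes>\<^sub>M PiM B M') (\<lambda>x. (RA x, RB x)))"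
    using pm km by (simp add: nn_integral_distr)
  also have "\<dots> = (\<integral>\<^sup>+ p. k p \<partial>(distr \<Omega> (PiM A M') RA \<Otimes>\<^sub>M distr \<Omega> (PiM B M') RB))"
    unfolding prod ..
  also have "\<dots> = (\<integral>\<^sup>+ f. \<integral>\<^sup>+ g. k (f, g) \<partial>distr \<Omega> (PiM B M') RB \<partial>distr \<Omega> (PiM A M') RA)"
  proof -
    have se: "sets (distr \<Omega> (PiM A M') RA \<Otimes>\<^sub>M distr \<Omega> (PiM B M') RB) = sets (PiM A M' \<Otimes>\<^sub>M PiM B M')"
      by (rule sets_pair_measure_cong) simp_all
    have "k \<in> borel_measurable (distr \<Omega> (PiM A M') RA \<Otimes>\<^sub>M distr \<Omega> (PiM B M') RB)"
      using km unfolding measurable_cong_sets[OF se refl] .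
    then show ?thesis by (rule sigma_finite_measure.nn_integral_fst[OF sB, symmetric])
  qed
  also have "\<dots> \<le> (\<integral>\<^sup>+ f. ennreal (\<sigma>\<^sup>2) \<partial>distr \<Omega> (PiM A M') RA)"
    by (intro nn_integral_mono inner)
  also have "\<dots> = ennreal (\<sigma>\<^sup>2)" using prob_space.emeasure_space_1[OF pA] by simp
  finally show ?thesis unfolding h_def X_def by simp
qed

lemma lin_bound:
  fixes f1 f2 f3 h :: "'w \<Rightarrow> real"
  assumes M: "prob_space M"
    and f1m: "f1 \<in> borel_measurable M" and f2m: "f2 \<in> borel_measurable M" and f3m: "f3 \<in> borel_measurable M"
    and f1p: "\<And>\<omega>. 0 \<le> f1 \<omega>" and f2p: "\<And>\<omega>. 0 \<le> f2 \<omega>" and f3p: "\<And>\<omega>. 0 \<le> f3 \<omega>"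
    and c0: "0 \<le> c0" and c1: "0 \<le> c1" and c2: "0 \<le> c2" and c3: "0 \<le> c3"
    and b1p: "0 \<le> b1" and b2p: "0 \<le> b2" and b3p: "0 \<le> b3"
    and b1: "(\<integral>\<^sup>+\<omega>. ennreal (f1 \<omega>) \<partial>M) \<le> ennreal b1"
    and b2: "(\<integral>\<^sup>+\<omega>. ennreal (f2 \<omega>) \<partial>M) \<le> ennreal b2"
    and b3: "(\<integral>\<^sup>+\<omega>. ennreal (f3 \<omega>) \<partial>M) \<le> ennreal b3"
    and pw: "\<And>\<omega>. h \<omega> \<le> c0 + c1 * f1 \<omega> + c2 * f2 \<omega> + c3 * f3 \<omega>"
  shows "(\<integral>\<^sup>+\<omega>. ennreal (h \<omega>) \<partial>M) \<le> ennreal (c0 + c1 * b1 + c2 * b2 + c3 * b3)"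
proof -
  interpret prob_space M by (rule M)
  have e: "ennreal (c0 + c1 * f1 \<omega> + c2 * f2 \<omega> + c3 * f3 \<omega>)
      = ennreal c0 + ennreal c1 * ennreal (f1 \<omega>) + ennreal c2 * ennreal (f2 \<omega>) + ennreal c3 * ennreal (f3 \<omega>)" for \<omega>
    using c0 c1 c2 c3 f1p[of \<omega>] f2p[of \<omega>] f3p[of \<omega>]
    by (simp add: ennreal_plus[symmetric] ennreal_mult[symmetric] del: ennreal_plus)
  have "(\<integral>\<^sup>+\<omega>. ennreal (h \<omega>) \<partial>M) \<le> (\<integral>\<^sup>+\<omega>. ennreal c0 + ennreal c1 * ennreal (f1 \<omega>) + ennreal c2 * ennreal (f2 \<omega>) + ennreal c3 * ennreal (f3 \<omega>) \<partial>M)"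
    by (intro nn_integral_mono) (simp only: e[symmetric] ennreal_leI pw)
  also have "\<dots> = ennreal c0 + ennreal c1 * (\<integral>\<^sup>+\<omega>. ennreal (f1 \<omega>) \<partial>M) + ennreal c2 * (\<integral>\<^sup>+\<omega>. ennreal (f2 \<omega>) \<partial>M) + ennreal c3 * (\<integral>\<^sup>+\<omega>. ennreal (f3 \<omega>) \<partial>M)"
    using f1m f2m f3m emeasure_space_1
    by (simp add: nn_integral_add nn_integral_cmult)
  also have "\<dots> \<le> ennreal c0 + ennreal c1 * ennreal b1 + ennreal c2 * ennreal b2 + ennreal c3 * ennreal b3"
    by (intro add_mono mult_left_mono b1 b2 b3 order_refl) simp_all
  also have "\<dots> = ennreal (c0 + c1 * b1 + c2 * b2 + c3 * b3)"
    using c0 c1 c2 c3 b1p b2p b3p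
    by (simp add: ennreal_plus[symmetric] ennreal_mult[symmetric] del: ennreal_plus)
  finally show ?thesis .
qed

lemma final_pw:
  fixes x :: "nat \<Rightarrow> 'a::euclidean_space"
  assumes m: "m \<ge> 1"
    and smooth: "\<And>i x y. i < m \<Longrightarrow> norm (gf i x - gf i y) \<le> L * norm (x - y)"
    and L: "L > 0"
  shows "(norm ((1 / real m) *\<^sub>R (\<Sum>i<m. gf i (x i)) - (1 / real m) *\<^sub>R (\<Sum>j<m. gf j ((1 / real m) *\<^sub>R (\<Sum>i<m. x i)))))\<^sup>2
         \<le> (L\<^sup>2 / real m) * dev m x"
proof -
  define xb where "xb = avg m x"
  have xb: "(1 / real m) *\<^sub>R (\<Sum>i<m. x i) = xb" unfolding xb_def avg_def ..
  define d where "d = (\<lambda>i. gf i (x i) - gf i xb)"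
  have "(1 / real m) *\<^sub>R (\<Sum>i<m. gf i (x i)) - (1 / real m) *\<^sub>R (\<Sum>j<m. gf j xb) = (1 / real m) *\<^sub>R (\<Sum>i<m. d i)"
    unfolding d_def by (simp add: scaleR_diff_right sum_subtractf)
  then have "(norm ((1 / real m) *\<^sub>R (\<Sum>i<m. gf i (x i)) - (1 / real m) *\<^sub>R (\<Sum>j<m. gf j ((1 / real m) *\<^sub>R (\<Sum>i<m. x i)))))\<^sup>2
      = (1 / real m)\<^sup>2 * (norm (\<Sum>i<m. d i))\<^sup>2"
    unfolding xb by (simp add: power_divide)
  also have "\<dots> \<le> (1 / real m)\<^sup>2 * (real m * (\<Sum>i<m. (norm (d i))\<^sup>2))"
  proof (rule mult_left_mono)
    have "norm (\<Sum>i<m. d i) \<le> (\<Sum>i<m. norm (d i))" by (rule norm_sum)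
    then have "(norm (\<Sum>i<m. d i))\<^sup>2 \<le> (\<Sum>i<m. norm (d i))\<^sup>2" by (intro power_mono) simp_all
    also have "(\<Sum>i<m. norm (d i))\<^sup>2 = (\<Sum>i<m. 1 * norm (d i))\<^sup>2" by simp
    also have "\<dots> \<le> (\<Sum>i<m. 1\<^sup>2) * (\<Sum>i<m. (norm (d i))\<^sup>2)" by (rule Cauchy_Schwarz_ineq_sum)
    also have "\<dots> = real m * (\<Sum>i<m. (norm (d i))\<^sup>2)" by simp
    finally show "(norm (\<Sum>i<m. d i))\<^sup>2 \<le> real m * (\<Sum>i<m. (norm (d i))\<^sup>2)" .
  qed simp
  also have "\<dots> = (1 / real m) * (\<Sum>i<m. (norm (d i))\<^sup>2)" using m by (simp add: power2_eq_square)
  also have "\<dots> \<le> (1 / real m) * (\<Sum>i<m. L\<^sup>2 * (norm (x i - xb))\<^sup>2)"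
  proof (intro mult_left_mono sum_mono)
    fix i assume "i \<in> {..<m}"
    then have "norm (d i) \<le> L * norm (x i - xb)" unfolding d_def using smooth by simp
    then have "(norm (d i))\<^sup>2 \<le> (L * norm (x i - xb))\<^sup>2" by (intro power_mono) simp_all
    then show "(norm (d i))\<^sup>2 \<le> L\<^sup>2 * (norm (x i - xb))\<^sup>2" by (simp add: power_mult_distrib)
  qed simp
  also have "\<dots> = (L\<^sup>2 / real m) * dev m x" unfolding dev_def xb_def by (simp add: sum_distrib_left)
  finally show ?thesis .
qed

lemma dev_meas:
  fixes u :: "'w \<Rightarrow> nat \<Rightarrow> 'a::euclidean_space"
  assumes "\<And>i. i < m \<Longrightarrow> (\<lambda>\<omega>. u \<omega> i) \<in> borel_measurable M"
  shows "(\<lambda>\<omega>. dev m (u \<omega>)) \<in> borel_measurable M"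
  unfolding dev_def avg_def using assms
  by (intro borel_measurable_sum borel_measurable_power borel_measurable_norm borel_measurable_diff
      borel_measurable_scaleR borel_measurable_const) auto

lemma W_arith:
  fixes \<rho> \<eta> L \<sigma> \<zeta> tt mm :: real
  assumes r0: "0 < \<rho>" and r1: "\<rho> \<le> 1" and tt: "tt \<ge> 1" and mm: "mm \<ge> 1"
    and hL: "\<eta>\<^sup>2 * L\<^sup>2 * 5120 \<le> \<rho> ^ 4"
  defines "S \<equiv> mm * (2 * \<sigma>\<^sup>2 + \<zeta>\<^sup>2) * \<eta>\<^sup>2"
  defines "c \<equiv> 3 * \<eta>\<^sup>2 * tt\<^sup>2 / \<rho>"
  shows "c * (mm * \<zeta>\<^sup>2) + (1 - \<rho>) * (9 * tt\<^sup>2 * S / \<rho>\<^sup>2) + c * (mm * \<sigma>\<^sup>2) + (c * L\<^sup>2) * (2560 * S / \<rho> ^ 4)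
         \<le> 9 * (tt + 1)\<^sup>2 * S / \<rho>\<^sup>2"
proof -
  define u where "u = tt\<^sup>2 * S / \<rho>"
  have S0: "S \<ge> 0" unfolding S_def using mm by simp
  have u0: "u \<ge> 0" unfolding u_def using S0 r0 by simp
  have p1: "c * (mm * \<zeta>\<^sup>2) + c * (mm * \<sigma>\<^sup>2) \<le> 3 * u"
  proof -
    have "c * (mm * \<zeta>\<^sup>2) + c * (mm * \<sigma>\<^sup>2) = (3 * \<eta>\<^sup>2 * tt\<^sup>2 / \<rho>) * mm * (\<sigma>\<^sup>2 + \<zeta>\<^sup>2)"
      unfolding c_def by (simp add: algebra_simps add_divide_distrib)
    also have "\<dots> \<le> (3 * \<eta>\<^sup>2 * tt\<^sup>2 / \<rho>) * mm * (2 * \<sigma>\<^sup>2 + \<zeta>\<^sup>2)"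
      using r0 mm by (intro mult_left_mono) simp_all
    also have "\<dots> = 3 * u" unfolding u_def S_def by (simp add: field_simps)
    finally show ?thesis .
  qed
  have p2: "(c * L\<^sup>2) * (2560 * S / \<rho> ^ 4) \<le> 3 / 2 * u"
  proof -
    have "(c * L\<^sup>2) * (2560 * S / \<rho> ^ 4) = (\<eta>\<^sup>2 * L\<^sup>2 * 5120) * (3 / 2 * tt\<^sup>2 * S / \<rho> ^ 5)"
      unfolding c_def by (simp add: field_simps eval_nat_numeral)
    also have "\<dots> \<le> \<rho> ^ 4 * (3 / 2 * tt\<^sup>2 * S / \<rho> ^ 5)"
      using hL S0 r0 by (intro mult_right_mono) simp_all
    also have "\<dots> = 3 / 2 * u" unfolding u_def using r0 by (simp add: field_simps eval_nat_numeral)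
    finally show ?thesis .
  qed
  have p3: "(1 - \<rho>) * (9 * tt\<^sup>2 * S / \<rho>\<^sup>2) = 9 * tt\<^sup>2 * S / \<rho>\<^sup>2 - 9 * u"
    unfolding u_def using r0 by (simp add: field_simps power2_eq_square)
  have p4: "9 * tt\<^sup>2 * S / \<rho>\<^sup>2 \<le> 9 * (tt + 1)\<^sup>2 * S / \<rho>\<^sup>2"
    using S0 r0 tt by (intro divide_right_mono mult_right_mono mult_left_mono power_mono) simp_all
  show ?thesis using p1 p2 p3 p4 u0 by linarith
qed

lemma X_arith:
  fixes \<rho> \<eta> L \<sigma> \<zeta> tt mm d :: real
  assumes r0: "0 < \<rho>" and r1: "\<rho> \<le> 1" and mm: "mm \<ge> 1"
    and hL: "\<eta>\<^sup>2 * L\<^sup>2 * 5120 \<le> \<rho> ^ 4" and dt: "d\<^sup>2 * tt\<^sup>2 \<le> 4"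
  defines "S \<equiv> mm * (2 * \<sigma>\<^sup>2 + \<zeta>\<^sup>2) * \<eta>\<^sup>2"
  defines "c \<equiv> 24 * \<eta>\<^sup>2 / \<rho>\<^sup>2"
  shows "c * (mm * \<zeta>\<^sup>2) + (2 * d\<^sup>2 / \<rho>) * (9 * tt\<^sup>2 * S / \<rho>\<^sup>2) + c * (mm * \<sigma>\<^sup>2)
           + ((1 - \<rho>) + c * L\<^sup>2) * (2560 * S / \<rho> ^ 4)
         \<le> 2560 * S / \<rho> ^ 4"
proof -
  define v where "v = S / \<rho> ^ 3"
  have S0: "S \<ge> 0" unfolding S_def using mm by simp
  have v0: "v \<ge> 0" unfolding v_def using S0 r0 by simp
  have s23: "S / \<rho>\<^sup>2 \<le> v"
  proof -
    have "S / \<rho>\<^sup>2 = (S / \<rho> ^ 3) * \<rho>" using r0 by (simp add: field_simps power_eq_if)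
    also have "\<dots> \<le> (S / \<rho> ^ 3) * 1" using r1 S0 r0 by (intro mult_left_mono) simp_all
    finally show ?thesis unfolding v_def by simp
  qed
  have q1: "c * (mm * \<zeta>\<^sup>2) + c * (mm * \<sigma>\<^sup>2) \<le> 24 * v"
  proof -
    have "c * (mm * \<zeta>\<^sup>2) + c * (mm * \<sigma>\<^sup>2) = (24 * \<eta>\<^sup>2 / \<rho>\<^sup>2) * mm * (\<sigma>\<^sup>2 + \<zeta>\<^sup>2)"
      unfolding c_def by (simp add: algebra_simps add_divide_distrib)
    also have "\<dots> \<le> (24 * \<eta>\<^sup>2 / \<rho>\<^sup>2) * mm * (2 * \<sigma>\<^sup>2 + \<zeta>\<^sup>2)"
      using r0 mm by (intro mult_left_mono) simp_all
    also have "\<dots> = 24 * (S / \<rho>\<^sup>2)" unfolding S_def by (simp add: field_simps)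
    also have "\<dots> \<le> 24 * v" using s23 by simp
    finally show ?thesis .
  qed
  have q2: "(2 * d\<^sup>2 / \<rho>) * (9 * tt\<^sup>2 * S / \<rho>\<^sup>2) \<le> 72 * v"
  proof -
    have "(2 * d\<^sup>2 / \<rho>) * (9 * tt\<^sup>2 * S / \<rho>\<^sup>2) = 18 * (d\<^sup>2 * tt\<^sup>2) * v"
      unfolding v_def using r0 by (simp add: field_simps power_eq_if)
    also have "\<dots> \<le> 18 * 4 * v" using dt v0 by (intro mult_right_mono mult_left_mono) simp_all
    finally show ?thesis by simp
  qed
  have q3: "(c * L\<^sup>2) * (2560 * S / \<rho> ^ 4) \<le> 12 * v"
  proof -
    have "(c * L\<^sup>2) * (2560 * S / \<rho> ^ 4) = (\<eta>\<^sup>2 * L\<^sup>2 * 5120) * (12 * S / \<rho> ^ 6)"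
      unfolding c_def by (simp add: field_simps power_eq_if)
    also have "\<dots> \<le> \<rho> ^ 4 * (12 * S / \<rho> ^ 6)"
      using hL S0 r0 by (intro mult_right_mono) simp_all
    also have "\<dots> = 12 * (S / \<rho>\<^sup>2)" using r0 by (simp add: field_simps power_eq_if)
    also have "\<dots> \<le> 12 * v" using s23 by simp
    finally show ?thesis .
  qed
  have q4: "(1 - \<rho>) * (2560 * S / \<rho> ^ 4) = 2560 * S / \<rho> ^ 4 - 2560 * v"
    unfolding v_def using r0 by (simp add: field_simps power_eq_if)
  have "((1 - \<rho>) + c * L\<^sup>2) * (2560 * S / \<rho> ^ 4) = (1 - \<rho>) * (2560 * S / \<rho> ^ 4) + (c * L\<^sup>2) * (2560 * S / \<rho> ^ 4)"
    by (rule distrib_right)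
  then show ?thesis using q1 q2 q3 q4 v0 by linarith
qed

lemma dev_const: "m \<ge> 1 \<Longrightarrow> dev m (\<lambda>i. c) = 0"
  unfolding dev_def avg_def by (simp add: sum_constant_scaleR)

theorem mainTheorem3:
  fixes m :: nat and L \<sigma> \<zeta> \<rho> \<eta> :: real
    and D :: "nat \<Rightarrow> 'z measure"
    and F :: "nat \<Rightarrow> 'a::euclidean_space \<Rightarrow> 'z \<Rightarrow> real"
    and G :: "nat \<Rightarrow> 'a \<Rightarrow> 'z \<Rightarrow> 'a"
    and fi :: "nat \<Rightarrow> 'a \<Rightarrow> real"
    and gf :: "nat \<Rightarrow> 'a \<Rightarrow> 'a"
    and P :: "nat \<Rightarrow> nat \<Rightarrow> real"
    and \<Omega> :: "'w measure"
    and Z :: "nat \<Rightarrow> nat \<Rightarrow> 'w \<Rightarrow> 'z"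
    and w1 :: 'a and T :: nat
  assumes m_pos: "m \<ge> 1"
    and D_prob: "\<And>i. i < m \<Longrightarrow> prob_space (D i)"
    and F_diff: "\<And>i x z. i < m \<Longrightarrow> z \<in> space (D i) \<Longrightarrow>
                    ((\<lambda>y. F i y z) has_derivative (\<lambda>h. G i x z \<bullet> h)) (at x)"
    and F_mean: "\<And>i x. i < m \<Longrightarrow> integrable (D i) (F i x) \<and> fi i x = (\<integral>z. F i x z \<partial>D i)"
    and fi_diff: "\<And>i x. i < m \<Longrightarrow> (fi i has_derivative (\<lambda>h. gf i x \<bullet> h)) (at x)"
    and G_unbiased: "\<And>i x. i < m \<Longrightarrow> integrable (D i) (G i x) \<and> (\<integral>z. G i x z \<partial>D i) = gf i x"
    and G_meas: "\<And>i. i < m \<Longrightarrow> (\<lambda>(x, z). G i x z) \<in> borel_measurable (borel \<Otimes>\<^sub>M D i)"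
    and L_pos: "L > 0"
    and smooth: "\<And>i x y. i < m \<Longrightarrow> norm (gf i x - gf i y) \<le> L * norm (x - y)"
    and variance: "\<And>i x. i < m \<Longrightarrow>
                    (\<integral>\<^sup>+ z. ennreal ((norm (G i x z - gf i x))\<^sup>2) \<partial>D i) \<le> ennreal (\<sigma>\<^sup>2)"
    and hetero: "\<And>x. (1 / real m) * (\<Sum>i<m. (norm (gf i x - (1 / real m) *\<^sub>R (\<Sum>j<m. gf j x)))\<^sup>2)
                    \<le> \<zeta>\<^sup>2"
    and gossip: "gossip_matrix m P"
    and rho: "\<rho> = spectral_gap m P"
    and \<Omega>_prob: "prob_space \<Omega>"
    and Z_indep: "prob_space.indep_vars \<Omega> (\<lambda>(t, i). D i) (\<lambda>(t, i). Z t i) ({1..} \<times> {..<m})"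
    and Z_distr: "\<And>t i. t \<ge> 1 \<Longrightarrow> i < m \<Longrightarrow> distr \<Omega> (D i) (Z t i) = D i"
    and eta_pos: "\<eta> > 0"
    and eta_le: "\<eta> \<le> \<rho>\<^sup>2 / (sqrt 5120 * L)"
    and T_pos: "T \<ge> 1"
  shows "(\<Sum>\<tau>=1..T. ennreal ((real \<tau>)\<^sup>2) *
            (\<integral>\<^sup>+ \<omega>. ennreal ((norm ((1 / real m) *\<^sub>R (\<Sum>i<m. gf i
                 (dat_x m P G \<eta> real w1 (\<lambda>t i. Z t i \<omega>) \<tau> i))
               - (1 / real m) *\<^sub>R (\<Sum>j<m. gf j
                 ((1 / real m) *\<^sub>R (\<Sum>i<m. dat_x m P G \<eta> real w1 (\<lambda>t i. Z t i \<omega>) \<tau> i)))))\<^sup>2) \<partial>\<Omega>))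
         \<le> ennreal (((sqrt 5120 * L)\<^sup>2 * (2 * \<sigma>\<^sup>2 + \<zeta>\<^sup>2) * \<eta>\<^sup>2 / (2 * \<rho> ^ 4))
                    * (\<Sum>\<tau>=1..T. (real \<tau>)\<^sup>2))"
proof -
  interpret \<Omega>: prob_space \<Omega> by (rule \<Omega>_prob)
  note rf = rho_facts[OF gossip, folded rho]
  have r0: "0 < \<rho>" and r1: "\<rho> \<le> 1" using rf by auto
  have hL: "\<eta>\<^sup>2 * L\<^sup>2 * 5120 \<le> \<rho> ^ 4"
  proof -
    have sp: "sqrt 5120 * L > 0" using L_pos by simp
    have "\<eta> * (sqrt 5120 * L) \<le> \<rho>\<^sup>2" using eta_le sp by (simp add: field_simps)
    moreover have "0 \<le> \<eta> * (sqrt 5120 * L)" using eta_pos sp by simp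
    ultimately have "(\<eta> * (sqrt 5120 * L))\<^sup>2 \<le> (\<rho>\<^sup>2)\<^sup>2" by (rule power_mono)
    moreover have "(\<eta> * (sqrt 5120 * L))\<^sup>2 = \<eta>\<^sup>2 * L\<^sup>2 * 5120" by (simp add: power_mult_distrib)
    moreover have "(\<rho>\<^sup>2)\<^sup>2 = \<rho> ^ 4" by (simp add: power_mult[symmetric])
    ultimately show ?thesis by simp
  qed
  have gfc: "\<And>i. i < m \<Longrightarrow> continuous_on UNIV (gf i)"
    using lipschitz_cont smooth L_pos by blast
  define st where "st = (\<lambda>n \<omega>. dat_state m P G \<eta> real w1 (\<lambda>t i. Z t i \<omega>) n)"
  define Wd where "Wd = (\<lambda>t \<omega>. dev m (fst (st (t - 1) \<omega>)))"
  define Xd where "Xd = (\<lambda>t \<omega>. dev m (snd (st (t - 1) \<omega>)))"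
  define Nn where "Nn = (\<lambda>t \<omega>. (\<Sum>i<m. (norm (G i (snd (st (t - 1) \<omega>) i) (Z t i \<omega>) - gf i (snd (st (t - 1) \<omega>) i)))\<^sup>2))"
  define S where "S = real m * (2 * \<sigma>\<^sup>2 + \<zeta>\<^sup>2) * \<eta>\<^sup>2"
  have Zm: "Z t i \<in> measurable \<Omega> (D i)" if "t \<ge> 1" "i < m" for t i
    using Z_indep that unfolding \<Omega>.indep_vars_def by auto
  have stm: "\<forall>i<m. (\<lambda>\<omega>. fst (st n \<omega>) i) \<in> borel_measurable \<Omega> \<and> (\<lambda>\<omega>. snd (st n \<omega>) i) \<in> borel_measurable \<Omega>" for n
    unfolding st_def by (rule state_meas[OF G_meas]) (use Zm in auto)
  have Wm: "Wd t \<in> borel_measurable \<Omega>" for t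
    unfolding Wd_def using stm by (intro dev_meas) auto
  have Xm: "Xd t \<in> borel_measurable \<Omega>" for t
    unfolding Xd_def using stm by (intro dev_meas) auto
  have Gm': "(\<lambda>\<omega>. G i (snd (st (t - 1) \<omega>) i) (Z t i \<omega>)) \<in> borel_measurable \<Omega>" if t: "t \<ge> 1" and i: "i < m" for t i
  proof -
    have "(\<lambda>\<omega>. (snd (st (t - 1) \<omega>) i, Z t i \<omega>)) \<in> measurable \<Omega> (borel \<Otimes>\<^sub>M D i)"
      using stm i Zm[OF t i] by (intro measurable_Pair) auto
    from measurable_compose[OF this G_meas[OF i]] show ?thesis by simp
  qed
  have gfm': "(\<lambda>\<omega>. gf i (snd (st (t - 1) \<omega>) i)) \<in> borel_measurable \<Omega>" if i: "i < m" for t i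
    using measurable_compose[OF _ borel_measurable_continuous_onI[OF gfc[OF i]]] stm i by blast
  have am: "(\<lambda>\<omega>. (norm (G i (snd (st (t - 1) \<omega>) i) (Z t i \<omega>) - gf i (snd (st (t - 1) \<omega>) i)))\<^sup>2) \<in> borel_measurable \<Omega>"
    if t: "t \<ge> 1" and i: "i < m" for t i
    using Gm'[OF t i] gfm'[OF i, of t] by measurable
  have Nm: "Nn t \<in> borel_measurable \<Omega>" if t: "t \<ge> 1" for t
    unfolding Nn_def using am[OF t] by (intro borel_measurable_sum) auto
  have W0: "0 \<le> Wd t \<omega>" and X0: "0 \<le> Xd t \<omega>" and N0: "0 \<le> Nn t \<omega>" for t \<omega>
    unfolding Wd_def Xd_def Nn_def by (simp_all add: dev_nonneg sum_nonneg)
  have Nb: "(\<integral>\<^sup>+\<omega>. ennreal (Nn t \<omega>) \<partial>\<Omega>) \<le> ennreal (real m * \<sigma>\<^sup>2)" if t: "t \<ge> 1" for t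
  proof -
    have "(\<integral>\<^sup>+\<omega>. ennreal (Nn t \<omega>) \<partial>\<Omega>) = (\<integral>\<^sup>+\<omega>. (\<Sum>i<m. ennreal ((norm (G i (snd (st (t - 1) \<omega>) i) (Z t i \<omega>) - gf i (snd (st (t - 1) \<omega>) i)))\<^sup>2)) \<partial>\<Omega>)"
      unfolding Nn_def by (intro nn_integral_cong sum_ennreal[symmetric]) simp
    also have "\<dots> = (\<Sum>i<m. \<integral>\<^sup>+\<omega>. ennreal ((norm (G i (snd (st (t - 1) \<omega>) i) (Z t i \<omega>) - gf i (snd (st (t - 1) \<omega>) i)))\<^sup>2) \<partial>\<Omega>)"
      using am[OF t] by (intro nn_integral_sum) auto
    also have "\<dots> \<le> (\<Sum>i<m. ennreal (\<sigma>\<^sup>2))"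
    proof (rule sum_mono)
      fix i assume "i \<in> {..<m}"
      then have i: "i < m" by simp
      show "(\<integral>\<^sup>+\<omega>. ennreal ((norm (G i (snd (st (t - 1) \<omega>) i) (Z t i \<omega>) - gf i (snd (st (t - 1) \<omega>) i)))\<^sup>2) \<partial>\<Omega>) \<le> ennreal (\<sigma>\<^sup>2)"
        unfolding st_def
        by (rule noise_bound[OF \<Omega>_prob D_prob G_meas gfc variance Z_indep Z_distr t i])
    qed
    also have "\<dots> = ennreal (real m * \<sigma>\<^sup>2)" by (simp add: ennreal_mult ennreal_of_nat_eq_real_of_nat)
    finally show ?thesis .
  qed
  have S0: "S \<ge> 0" unfolding S_def by simp
  have stS: "st t \<omega> = dat_round m P G \<eta> real t (\<lambda>i. Z t i \<omega>) (fst (st (t - 1) \<omega>), snd (st (t - 1) \<omega>))"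
    if "t \<ge> 1" for t \<omega>
    using that unfolding st_def by (cases t) auto
  define \<delta> where "\<delta> = (\<lambda>t. real t / (\<Sum>s=1..t. real s))"
  have rbW: "Wd (Suc t) \<omega> \<le> (1 - \<rho>) * Wd t \<omega> + (3 * \<eta>\<^sup>2 * (real t)\<^sup>2 / \<rho>) * (Nn t \<omega> + L\<^sup>2 * Xd t \<omega> + real m * \<zeta>\<^sup>2)"
    and rbX: "Xd (Suc t) \<omega> \<le> (1 - \<rho>) * Xd t \<omega> + (2 * (\<delta> t)\<^sup>2 / \<rho>) * Wd t \<omega> + (24 * \<eta>\<^sup>2 / \<rho>\<^sup>2) * (Nn t \<omega> + L\<^sup>2 * Xd t \<omega> + real m * \<zeta>\<^sup>2)"
    if t: "t \<ge> 1" for t \<omega>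
  proof -
    note R = round_bound[OF gossip t m_pos smooth L_pos hetero, where w="fst (st (t - 1) \<omega>)" and x="snd (st (t - 1) \<omega>)" and G=G and zt="\<lambda>i. Z t i \<omega>" and \<eta>=\<eta>, folded rho stS[OF t]]
    show "Wd (Suc t) \<omega> \<le> (1 - \<rho>) * Wd t \<omega> + (3 * \<eta>\<^sup>2 * (real t)\<^sup>2 / \<rho>) * (Nn t \<omega> + L\<^sup>2 * Xd t \<omega> + real m * \<zeta>\<^sup>2)"
      using R(1) unfolding Wd_def Xd_def Nn_def by simp
    show "Xd (Suc t) \<omega> \<le> (1 - \<rho>) * Xd t \<omega> + (2 * (\<delta> t)\<^sup>2 / \<rho>) * Wd t \<omega> + (24 * \<eta>\<^sup>2 / \<rho>\<^sup>2) * (Nn t \<omega> + L\<^sup>2 * Xd t \<omega> + real m * \<zeta>\<^sup>2)"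
      using R(2) unfolding Wd_def Xd_def Nn_def \<delta>_def by simp
  qed
  have IHc: "(\<integral>\<^sup>+\<omega>. ennreal (Wd t \<omega>) \<partial>\<Omega>) \<le> ennreal (9 * (real t)\<^sup>2 * S / \<rho>\<^sup>2) \<and>
             (\<integral>\<^sup>+\<omega>. ennreal (Xd t \<omega>) \<partial>\<Omega>) \<le> ennreal (2560 * S / \<rho> ^ 4)" if "t \<ge> 1" for t
    using that
  proof (induction t rule: nat_induct_at_least)
    case base
    have "Wd 1 \<omega> = 0" "Xd 1 \<omega> = 0" for \<omega>
      unfolding Wd_def Xd_def st_def using dev_const[OF m_pos] by simp_all
    then show ?case by simp
  next
    case (Suc t)
    have t: "t \<ge> 1" by fact
    have IW: "(\<integral>\<^sup>+\<omega>. ennreal (Wd t \<omega>) \<partial>\<Omega>) \<le> ennreal (9 * (real t)\<^sup>2 * S / \<rho>\<^sup>2)"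
      and IX: "(\<integral>\<^sup>+\<omega>. ennreal (Xd t \<omega>) \<partial>\<Omega>) \<le> ennreal (2560 * S / \<rho> ^ 4)" using Suc.IH by auto
    define c where "c = 3 * \<eta>\<^sup>2 * (real t)\<^sup>2 / \<rho>"
    define c' where "c' = 24 * \<eta>\<^sup>2 / \<rho>\<^sup>2"
    have c0: "c \<ge> 0" "c' \<ge> 0" unfolding c_def c'_def using r0 by simp_all
    have "(\<integral>\<^sup>+\<omega>. ennreal (Wd (Suc t) \<omega>) \<partial>\<Omega>)
        \<le> ennreal (c * (real m * \<zeta>\<^sup>2) + (1 - \<rho>) * (9 * (real t)\<^sup>2 * S / \<rho>\<^sup>2) + c * (real m * \<sigma>\<^sup>2) + (c * L\<^sup>2) * (2560 * S / \<rho> ^ 4))"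
    proof (rule lin_bound[OF \<Omega>_prob Wm Nm[OF t] Xm W0 N0 X0 _ _ _ _ _ _ _ IW Nb[OF t] IX])
      fix \<omega>
      have "c * (Nn t \<omega> + L\<^sup>2 * Xd t \<omega> + real m * \<zeta>\<^sup>2) = c * (real m * \<zeta>\<^sup>2) + c * Nn t \<omega> + (c * L\<^sup>2) * Xd t \<omega>"
        by (simp add: algebra_simps)
      then show "Wd (Suc t) \<omega> \<le> c * (real m * \<zeta>\<^sup>2) + (1 - \<rho>) * Wd t \<omega> + c * Nn t \<omega> + c * L\<^sup>2 * Xd t \<omega>"
        using rbW[OF t, of \<omega>] unfolding c_def by linarith
    qed (use c0 r1 S0 r0 in auto)
    also have "\<dots> \<le> ennreal (9 * (real (Suc t))\<^sup>2 * S / \<rho>\<^sup>2)"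
    proof (rule ennreal_leI)
      have "real t \<ge> 1" "real m \<ge> 1" using t m_pos by simp_all
      note WA = W_arith[OF r0 r1 this hL, where \<sigma>=\<sigma> and \<zeta>=\<zeta>]
      have su: "real (Suc t) = real t + 1" by simp
      show "c * (real m * \<zeta>\<^sup>2) + (1 - \<rho>) * (9 * (real t)\<^sup>2 * S / \<rho>\<^sup>2) + c * (real m * \<sigma>\<^sup>2) + (c * L\<^sup>2) * (2560 * S / \<rho> ^ 4)
          \<le> 9 * (real (Suc t))\<^sup>2 * S / \<rho>\<^sup>2"
        unfolding c_def S_def su by (rule WA)
    qed
    finally have W1: "(\<integral>\<^sup>+\<omega>. ennreal (Wd (Suc t) \<omega>) \<partial>\<Omega>) \<le> ennreal (9 * (real (Suc t))\<^sup>2 * S / \<rho>\<^sup>2)" .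
    have dp: "(\<delta> t)\<^sup>2 * (real t)\<^sup>2 \<le> 4" unfolding \<delta>_def using delta_props(4)[OF t] .
    have "(\<integral>\<^sup>+\<omega>. ennreal (Xd (Suc t) \<omega>) \<partial>\<Omega>)
        \<le> ennreal (c' * (real m * \<zeta>\<^sup>2) + (2 * (\<delta> t)\<^sup>2 / \<rho>) * (9 * (real t)\<^sup>2 * S / \<rho>\<^sup>2) + c' * (real m * \<sigma>\<^sup>2)
           + ((1 - \<rho>) + c' * L\<^sup>2) * (2560 * S / \<rho> ^ 4))"
    proof (rule lin_bound[OF \<Omega>_prob Wm Nm[OF t] Xm W0 N0 X0 _ _ _ _ _ _ _ IW Nb[OF t] IX])
      fix \<omega>
      have "c' * (Nn t \<omega> + L\<^sup>2 * Xd t \<omega> + real m * \<zeta>\<^sup>2) = c' * (real m * \<zeta>\<^sup>2) + c' * Nn t \<omega> + (c' * L\<^sup>2) * Xd t \<omega>"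
        by (simp add: algebra_simps)
      moreover have "((1 - \<rho>) + c' * L\<^sup>2) * Xd t \<omega> = (1 - \<rho>) * Xd t \<omega> + (c' * L\<^sup>2) * Xd t \<omega>"
        by (simp add: algebra_simps)
      ultimately show "Xd (Suc t) \<omega> \<le> c' * (real m * \<zeta>\<^sup>2) + 2 * (\<delta> t)\<^sup>2 / \<rho> * Wd t \<omega> + c' * Nn t \<omega> + ((1 - \<rho>) + c' * L\<^sup>2) * Xd t \<omega>"
        using rbX[OF t, of \<omega>] unfolding c'_def by linarith
    qed (use c0 r1 S0 r0 in auto)
    also have "\<dots> \<le> ennreal (2560 * S / \<rho> ^ 4)"
    proof (rule ennreal_leI)
      have "real m \<ge> 1" using m_pos by simp
      note XA = X_arith[OF r0 r1 this hL dp, where \<sigma>=\<sigma> and \<zeta>=\<zeta>]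
      show "c' * (real m * \<zeta>\<^sup>2) + (2 * (\<delta> t)\<^sup>2 / \<rho>) * (9 * (real t)\<^sup>2 * S / \<rho>\<^sup>2) + c' * (real m * \<sigma>\<^sup>2)
           + ((1 - \<rho>) + c' * L\<^sup>2) * (2560 * S / \<rho> ^ 4) \<le> 2560 * S / \<rho> ^ 4"
        unfolding c'_def S_def by (rule XA)
    qed
    finally show ?case using W1 by simp
  qed
  define Kc where "Kc = (sqrt 5120 * L)\<^sup>2 * (2 * \<sigma>\<^sup>2 + \<zeta>\<^sup>2) * \<eta>\<^sup>2 / (2 * \<rho> ^ 4)"
  have Kc0: "Kc \<ge> 0" unfolding Kc_def using r0 by simp
  have per: "(\<integral>\<^sup>+ \<omega>. ennreal ((norm ((1 / real m) *\<^sub>R (\<Sum>i<m. gf i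
                 (dat_x m P G \<eta> real w1 (\<lambda>t i. Z t i \<omega>) \<tau> i))
               - (1 / real m) *\<^sub>R (\<Sum>j<m. gf j
                 ((1 / real m) *\<^sub>R (\<Sum>i<m. dat_x m P G \<eta> real w1 (\<lambda>t i. Z t i \<omega>) \<tau> i)))))\<^sup>2) \<partial>\<Omega>)
        \<le> ennreal Kc" if tau: "\<tau> \<ge> 1" for \<tau>
  proof -
    have "(\<integral>\<^sup>+ \<omega>. ennreal ((norm ((1 / real m) *\<^sub>R (\<Sum>i<m. gf i
                 (dat_x m P G \<eta> real w1 (\<lambda>t i. Z t i \<omega>) \<tau> i))
               - (1 / real m) *\<^sub>R (\<Sum>j<m. gf j
                 ((1 / real m) *\<^sub>R (\<Sum>i<m. dat_x m P G \<eta> real w1 (\<lambda>t i. Z t i \<omega>) \<tau> i)))))\<^sup>2) \<partial>\<Omega>)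
        \<le> (\<integral>\<^sup>+ \<omega>. ennreal (L\<^sup>2 / real m) * ennreal (Xd \<tau> \<omega>) \<partial>\<Omega>)"
    proof (rule nn_integral_mono)
      fix \<omega>
      have "(norm ((1 / real m) *\<^sub>R (\<Sum>i<m. gf i
                 (dat_x m P G \<eta> real w1 (\<lambda>t i. Z t i \<omega>) \<tau> i))
               - (1 / real m) *\<^sub>R (\<Sum>j<m. gf j
                 ((1 / real m) *\<^sub>R (\<Sum>i<m. dat_x m P G \<eta> real w1 (\<lambda>t i. Z t i \<omega>) \<tau> i)))))\<^sup>2
            \<le> (L\<^sup>2 / real m) * Xd \<tau> \<omega>"
        unfolding dat_x_def Xd_def st_def by (rule final_pw[OF m_pos smooth L_pos])
      then show "ennreal ((norm ((1 / real m) *\<^sub>R (\<Sum>i<m. gf i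
                 (dat_x m P G \<eta> real w1 (\<lambda>t i. Z t i \<omega>) \<tau> i))
               - (1 / real m) *\<^sub>R (\<Sum>j<m. gf j
                 ((1 / real m) *\<^sub>R (\<Sum>i<m. dat_x m P G \<eta> real w1 (\<lambda>t i. Z t i \<omega>) \<tau> i)))))\<^sup>2)
            \<le> ennreal (L\<^sup>2 / real m) * ennreal (Xd \<tau> \<omega>)"
        using X0[of \<tau> \<omega>] by (simp add: ennreal_mult[symmetric] ennreal_leI del: ennreal_mult)
    qed
    also have "\<dots> = ennreal (L\<^sup>2 / real m) * (\<integral>\<^sup>+ \<omega>. ennreal (Xd \<tau> \<omega>) \<partial>\<Omega>)"
      using Xm[of \<tau>] by (intro nn_integral_cmult) simp
    also have "\<dots> \<le> ennreal (L\<^sup>2 / real m) * ennreal (2560 * S / \<rho> ^ 4)"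
      using IHc[OF tau] by (intro mult_left_mono) simp_all
    also have "\<dots> = ennreal ((L\<^sup>2 / real m) * (2560 * S / \<rho> ^ 4))"
      using S0 r0 by (simp add: ennreal_mult[symmetric] del: ennreal_mult)
    also have "(L\<^sup>2 / real m) * (2560 * S / \<rho> ^ 4) = Kc"
      unfolding Kc_def S_def using m_pos r0 by (simp add: power_mult_distrib field_simps)
    finally show ?thesis .
  qed
  have "(\<Sum>\<tau>=1..T. ennreal ((real \<tau>)\<^sup>2) *
            (\<integral>\<^sup>+ \<omega>. ennreal ((norm ((1 / real m) *\<^sub>R (\<Sum>i<m. gf i
                 (dat_x m P G \<eta> real w1 (\<lambda>t i. Z t i \<omega>) \<tau> i))
               - (1 / real m) *\<^sub>R (\<Sum>j<m. gf j
                 ((1 / real m) *\<^sub>R (\<Sum>i<m. dat_x m P G \<eta> real w1 (\<lambda>t i. Z t i \<omega>) \<tau> i)))))\<^sup>2) \<partial>\<Omega>))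
        \<le> (\<Sum>\<tau>=1..T. ennreal ((real \<tau>)\<^sup>2) * ennreal Kc)"
    by (intro sum_mono mult_left_mono per) auto
  also have "\<dots> = (\<Sum>\<tau>=1..T. ennreal (Kc * (real \<tau>)\<^sup>2))"
    using Kc0 by (intro sum.cong refl) (simp add: ennreal_mult[symmetric] mult.commute del: ennreal_mult)
  also have "\<dots> = ennreal (\<Sum>\<tau>=1..T. Kc * (real \<tau>)\<^sup>2)"
    using Kc0 by (intro sum_ennreal) simp
  also have "\<dots> = ennreal (Kc * (\<Sum>\<tau>=1..T. (real \<tau>)\<^sup>2))" by (simp add: sum_distrib_left)
  finally show ?thesis unfolding Kc_def .
qed

end
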